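(* Let $n\ge1$, $\alpha,\gamma,\beta_1,\dots,\beta_n\in\widehat{\mathbb{F}_q^\times}$, and $i\in\{0,1,\dots,n-1\}$. (i) If $\beta_{i+1}\cdots\beta_n\neq\varepsilon$, then for $\lambda_1,\dots,\lambda_i,x\in\mathbb{F}_q$, $$F_D^{(n)}\!\left({\alpha;\beta_1,\dots,\beta_n\atop\gamma};\lambda_1,\dots,\lambda_i,x,\dots,x\right)=F_D^{(i+1)}\!\left({\alpha;\beta_1,\dots,\beta_i,\beta_{i+1}\cdots\beta_n\atop\gamma};\lambda_1,\dots,\lambda_i,x\right).$$ In particular, if $\beta_1\cdots\beta_n\neq\varepsilon$, then $F_D^{(n)}\!\left({\alpha;\beta_1,\dots,\beta_n\atop\gamma};x,\dots,x\right)={}_2F_1\!\left({\alpha,\beta_1\cdots\beta_n\atop\gamma};x\right)$. (ii) If $\beta_{i+1}\cdots\beta_n\notin\{\varepsilon,\overline{\alpha}\gamma\}$, then for $\lambda_1,\dots,\lambda_i\in\mathbb{F}_q$, $$F_D^{(n)}\!\left({\alpha;\beta_1,\dots,\beta_n\atop\gamma};\lambda_1,\dots,\lambda_i,1,\dots,1\right)=\frac{g^\circ(\gamma)\,g(\overline{\alpha\beta_{i+1}\cdots\beta_n}\gamma)}{g^\circ(\overline{\alpha}\gamma)\,g^\circ(\overline{\beta_{i+1}\cdots\beta_n}\gamma)}F_D^{(i)}\!\left({\alpha;\beta_1,\dots,\beta_i\atop\overline{\beta_{i+1}\cdots\beta_n}\gamma};\lambda_1,\dots,\lambda_i\right).$$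 In particular, if $\beta_1\cdots\beta_n\notin\{\varepsilon,\overline{\alpha}\gamma\}$, then $F_D^{(n)}\!\left({\alpha;\beta_1,\dots,\beta_n\atop\gamma};1,\dots,1\right)=\frac{g^\circ(\gamma)g(\overline{\alpha\beta_1\cdots\beta_n}\gamma)}{g^\circ(\overline{\alpha}\gamma)g^\circ(\overline{\beta_1\cdots\beta_n}\gamma)}$.
   Context: $\mathbb{F}_q$ is a finite field with $q$ elements. $\widehat{\mathbb{F}_q^\times}$ is the group of multiplicative characters $\mathbb{F}_q^\times\to\overline{\mathbb{Q}}^\times$, $\varepsilon$ the trivial character; every character (including $\varepsilon$) is extended by $0$ at $0$; $\overline{\eta}=\eta^{-1}$, and $\overline{\eta_1\cdots\eta_k}=(\eta_1\cdots\eta_k)^{-1}$; $\delta(\eta)=1$ if $\eta=\varepsilon$, else $0$. $\psi$ is a fixed non-trivial additive character. $g(\eta)=-\sum_{x\in\mathbb{F}_q^\times}\psi(x)\eta(x)$, $g^\circ(\eta)=q^{\delta(\eta)}g(\eta)$, $(\alpha)_\nu=g(\alpha\nu)/g(\alpha)$, $(\alpha)^\circ_\nu=g^\circ(\alpha\nu)/g^\circ(\alpha)$. For $\lambda\in\mathbb{F}_q$, ${}_2F_1\!\left({\alpha,\beta\atop\gamma};\lambda\right)=\frac{1}{1-q}\sum_{\nu}\frac{(\alpha)_\nu(\beta)_\nu}{(\varepsilon)^\circ_\nu(\gamma)^\circ_\nu}\nu(\lambda)$. Lauricella's $F_D$: for $m\ge1$ and $\lambda_j\in\mathbb{F}_q$,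 $F_D^{(m)}\!\left({\alpha;\beta_1,\dots,\beta_m\atop\gamma};\lambda_1,\dots,\lambda_m\right)=\frac{1}{(1-q)^m}\sum_{\nu_1,\dots,\nu_m\in\widehat{\mathbb{F}_q^\times}}\frac{(\alpha)_{\nu_1\cdots\nu_m}\prod_j(\beta_j)_{\nu_j}}{(\gamma)^\circ_{\nu_1\cdots\nu_m}\prod_j(\varepsilon)^\circ_{\nu_j}}\prod_j\nu_j(\lambda_j)$, and by convention $F_D^{(0)}=1$. *)

theory Defs
  imports Complex_Main "HOL-Library.FuncSet"
begin

text \<open>Finite field = type of class field + finite; q = card (UNIV :: 'a set).
 Character values are taken in complex numbers (an algebraic closure of Q embeds in C).
 Multiplicative characters are functions on the whole field, extended by 0 at 0.\<close>

definition mchars :: "('a::field \<Rightarrow> complex) set" where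
  "mchars = {\<chi>. \<chi> 0 = 0 \<and> \<chi> 1 = 1 \<and> (\<forall>x y. \<chi> (x * y) = \<chi> x * \<chi> y)}"

definition eps :: "'a::field \<Rightarrow> complex" where
  "eps = (\<lambda>x. if x = 0 then 0 else 1)"

definition cmul :: "('a \<Rightarrow> complex) \<Rightarrow> ('a \<Rightarrow> complex) \<Rightarrow> 'a \<Rightarrow> complex" where
  "cmul \<chi> \<eta> = (\<lambda>x. \<chi> x * \<eta> x)"

definition cinv :: "('a \<Rightarrow> complex) \<Rightarrow> 'a \<Rightarrow> complex" where
  "cinv \<eta> = (\<lambda>x. inverse (\<eta> x))"

definition chprod :: "(nat \<Rightarrow> 'a::field \<Rightarrow> complex) \<Rightarrow> nat set \<Rightarrow> 'a \<Rightarrow> complex" where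
  "chprod \<nu> I = (\<lambda>x. if x = 0 then 0 else (\<Prod>j\<in>I. \<nu> j x))"

definition delta :: "('a::field \<Rightarrow> complex) \<Rightarrow> nat" where
  "delta \<eta> = (if \<eta> = eps then 1 else 0)"

definition add_char :: "('a::field \<Rightarrow> complex) \<Rightarrow> bool" where
  "add_char \<psi> \<longleftrightarrow> \<psi> 0 = 1 \<and> (\<forall>x y. \<psi> (x + y) = \<psi> x * \<psi> y)"

definition gauss :: "('a::{field,finite} \<Rightarrow> complex) \<Rightarrow> ('a \<Rightarrow> complex) \<Rightarrow> complex" where
  "gauss \<psi> \<eta> = - (\<Sum>x\<in>UNIV - {0}. \<psi> x * \<eta> x)"

definition gauss0 :: "('a::{field,finite} \<Rightarrow> complex) \<Rightarrow> ('a \<Rightarrow> complex) \<Rightarrow> complex" where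
  "gauss0 \<psi> \<eta> = of_nat (card (UNIV :: 'a set)) ^ delta \<eta> * gauss \<psi> \<eta>"

definition poch :: "('a::{field,finite} \<Rightarrow> complex) \<Rightarrow> ('a \<Rightarrow> complex) \<Rightarrow> ('a \<Rightarrow> complex) \<Rightarrow> complex" where
  "poch \<psi> \<alpha> \<nu> = gauss \<psi> (cmul \<alpha> \<nu>) / gauss \<psi> \<alpha>"

definition poch0 :: "('a::{field,finite} \<Rightarrow> complex) \<Rightarrow> ('a \<Rightarrow> complex) \<Rightarrow> ('a \<Rightarrow> complex) \<Rightarrow> complex" where
  "poch0 \<psi> \<alpha> \<nu> = gauss0 \<psi> (cmul \<alpha> \<nu>) / gauss0 \<psi> \<alpha>"

definition F21 :: "('a::{field,finite} \<Rightarrow> complex) \<Rightarrow> ('a \<Rightarrow> complex) \<Rightarrow> ('a \<Rightarrow> complex)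
    \<Rightarrow> ('a \<Rightarrow> complex) \<Rightarrow> 'a \<Rightarrow> complex" where
  "F21 \<psi> \<alpha> \<beta> \<gamma> lam = (1 / (1 - of_nat (card (UNIV :: 'a set)))) *
     (\<Sum>\<nu>\<in>mchars. poch \<psi> \<alpha> \<nu> * poch \<psi> \<beta> \<nu> / (poch0 \<psi> eps \<nu> * poch0 \<psi> \<gamma> \<nu>) * \<nu> lam)"

text \<open>Lauricella F_D^(m): parameters beta 0..beta (m-1), arguments lam 0..lam (m-1).\<close>
definition FD :: "('a::{field,finite} \<Rightarrow> complex) \<Rightarrow> nat \<Rightarrow> ('a \<Rightarrow> complex)
    \<Rightarrow> (nat \<Rightarrow> 'a \<Rightarrow> complex) \<Rightarrow> ('a \<Rightarrow> complex) \<Rightarrow> (nat \<Rightarrow> 'a) \<Rightarrow> complex" where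
  "FD \<psi> m \<alpha> \<beta> \<gamma> lam = (if m = 0 then 1 else
     (1 / (1 - of_nat (card (UNIV :: 'a set))) ^ m) *
     (\<Sum>\<nu>\<in>{..<m} \<rightarrow>\<^sub>E mchars.
        poch \<psi> \<alpha> (chprod \<nu> {..<m}) * (\<Prod>j<m. poch \<psi> (\<beta> j) (\<nu> j))
        / (poch0 \<psi> \<gamma> (chprod \<nu> {..<m}) * (\<Prod>j<m. poch0 \<psi> eps (\<nu> j)))
        * (\<Prod>j<m. \<nu> j (lam j))))"

end

theory Submission
  imports Defs "HOL-Algebra.Algebraic_Closure_Type"
begin

lemma ring_pow_eq:
  "x [^]\<^bsub>(ring_of_type_algebra :: 'a::field ring)\<^esub> (n::nat) = x ^ n"
  by (induction n) (simp_all add: ring_of_type_algebra_def nat_pow_def)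

lemma fin_field_gen:
  "\<exists>a::'a::{field,finite}. a \<noteq> 0 \<and> (\<forall>x. x \<noteq> 0 \<longrightarrow> (\<exists>i::nat. x = a ^ i))"
proof -
  define R where "R = (ring_of_type_algebra :: 'a ring)"
  interpret field R unfolding R_def by rule
  have "finite (carrier R)" by simp
  from finite_field_mult_group_has_gen[OF this] obtain a where a0: "a \<in> carrier (Multiplicative_Group.mult_of R)" and
    a: "carrier (Multiplicative_Group.mult_of R) = {a[^]\<^bsub>R\<^esub> i | i::nat . i \<in> UNIV}" by blast
  have cR: "carrier R = UNIV" "\<zero>\<^bsub>R\<^esub> = 0" by (auto simp: R_def ring_of_type_algebra_def)
  show ?thesis
  proof (intro exI[of _ a] conjI allI impI)
    show "a \<noteq> 0" using a0 cR by simp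
  next
    fix x :: 'a assume "x \<noteq> 0"
    hence "x \<in> carrier (Multiplicative_Group.mult_of R)" using cR by simp
    then obtain i where "x = a[^]\<^bsub>R\<^esub> (i::nat)" using a by blast
    thus "\<exists>i::nat. x = a ^ i" using ring_pow_eq[of a i] by (auto simp: R_def)
  qed
qed

lemma card_ge2: "card (UNIV :: 'a::{field,finite} set) \<ge> 2"
proof -
  have "card {0::'a, 1} \<le> card (UNIV::'a set)" by (rule card_mono) auto
  thus ?thesis by simp
qed

lemma fermat:
  fixes x :: "'a::{field,finite}"
  assumes "x \<noteq> 0" shows "x ^ (card (UNIV::'a set) - 1) = 1"
proof -
  define S where "S = (UNIV - {0::'a})"
  have fin: "finite S" by (simp add: S_def)
  have cS: "card S = card (UNIV::'a set) - 1" unfolding S_def by (simp add: card_Diff_singleton)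
  have "(\<Prod>y\<in>S. x * y) = (\<Prod>y\<in>S. y)"
  proof (rule prod.reindex_bij_witness[of _ "\<lambda>y. y / x" "\<lambda>y. x * y"])
  qed (use assms in \<open>auto simp: S_def\<close>)
  moreover have "(\<Prod>y\<in>S. x * y) = x ^ card S * (\<Prod>y\<in>S. y)"
    by (simp add: prod.distrib)
  moreover have "(\<Prod>y\<in>S. y) \<noteq> 0" using fin by (simp add: S_def)
  ultimately show ?thesis using cS by simp
qed

lemma gen_ex:
  "\<exists>a::'a::{field,finite}. a \<noteq> 0 \<and> bij_betw (\<lambda>i. a ^ i) {..<card (UNIV::'a set) - 1} (UNIV - {0})"
proof -
  obtain a :: 'a where a0: "a \<noteq> 0" and a: "\<And>x. x \<noteq> 0 \<Longrightarrow> \<exists>i::nat. x = a ^ i"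
    using fin_field_gen by blast
  define N where "N = card (UNIV::'a set) - 1"
  have N0: "N > 0" using card_ge2[where 'a='a] by (simp add: N_def)
  have aN: "a ^ N = 1" using fermat[OF a0] by (simp add: N_def)
  have img: "(\<lambda>i. a ^ i) ` {..<N} = UNIV - {0}"
  proof
    show "(\<lambda>i. a ^ i) ` {..<N} \<subseteq> UNIV - {0}" using a0 by auto
  next
    show "UNIV - {0} \<subseteq> (\<lambda>i. a ^ i) ` {..<N}"
    proof
      fix x assume "x \<in> (UNIV - {0::'a})"
      then obtain i where xi: "x = a ^ i" using a by blast
      have "a ^ i = a ^ (N * (i div N) + i mod N)" by simp
      also have "\<dots> = a ^ (i mod N)" by (simp only: power_add power_mult aN power_one mult_1)
      finally show "x \<in> (\<lambda>i. a ^ i) ` {..<N}" using xi N0 by auto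
    qed
  qed
  have "card ((\<lambda>i. a ^ i) ` {..<N}) = card {..<N}"
    by (simp only: img) (simp add: card_Diff_singleton N_def)
  hence "inj_on (\<lambda>i. a ^ i) {..<N}" by (rule eq_card_imp_inj_on[rotated]) simp
  thus ?thesis using a0 img unfolding bij_betw_def N_def by blast
qed

definition gen :: "'a::{field,finite}" where
  "gen = (SOME a. a \<noteq> 0 \<and> bij_betw (\<lambda>i. a ^ i) {..<card (UNIV::'a set) - 1} (UNIV - {0}))"

definition dlog :: "'a::{field,finite} \<Rightarrow> nat" where
  "dlog x = inv_into {..<card (UNIV::'a set) - 1} (\<lambda>i. gen ^ i) x"

definition chi :: "complex \<Rightarrow> 'a::{field,finite} \<Rightarrow> complex" where
  "chi z x = (if x = 0 then 0 else z ^ dlog x)"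

lemma gen_props: "(gen::'a::{field,finite}) \<noteq> 0 \<and>
    bij_betw (\<lambda>i. (gen::'a) ^ i) {..<card (UNIV::'a set) - 1} (UNIV - {0})"
proof -
  have "\<exists>a::'a. a \<noteq> 0 \<and> bij_betw (\<lambda>i. a ^ i) {..<card (UNIV::'a set) - 1} (UNIV - {0})"
    by (rule gen_ex)
  from someI_ex[OF this] show ?thesis unfolding gen_def by simp
qed

lemma Npos: "card (UNIV::'a::{field,finite} set) - 1 > 0"
  using card_ge2[where 'a='a] by simp

lemma dlog_lt: "(x::'a::{field,finite}) \<noteq> 0 \<Longrightarrow> dlog x < card (UNIV::'a set) - 1"
  unfolding dlog_def using gen_props[where 'a='a]
  by (metis DiffI UNIV_I bij_betw_def inv_into_into lessThan_iff singletonD)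

lemma gen_dlog: "(x::'a::{field,finite}) \<noteq> 0 \<Longrightarrow> gen ^ dlog x = x"
  unfolding dlog_def using gen_props[where 'a='a]
  by (metis DiffI UNIV_I bij_betw_def f_inv_into_f singletonD)

lemma gen_pow_mod: "(gen::'a::{field,finite}) ^ m = gen ^ (m mod (card (UNIV::'a set) - 1))"
proof -
  define N where "N = card (UNIV::'a set) - 1"
  have aN: "(gen::'a) ^ N = 1" using fermat gen_props unfolding N_def by blast
  have "(gen::'a) ^ m = gen ^ (N * (m div N) + m mod N)" by simp
  also have "\<dots> = gen ^ (m mod N)" by (simp only: power_add power_mult aN power_one mult_1)
  finally show ?thesis unfolding N_def .
qed

lemma gen_pow_eq:
  assumes "(gen::'a::{field,finite}) ^ m = gen ^ n"
  shows "m mod (card (UNIV::'a set) - 1) = n mod (card (UNIV::'a set) - 1)"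
proof -
  define N where "N = card (UNIV::'a set) - 1"
  have "inj_on (\<lambda>i. (gen::'a) ^ i) {..<N}" using gen_props unfolding N_def bij_betw_def by blast
  moreover have "(gen::'a) ^ (m mod N) = gen ^ (n mod N)" using assms gen_pow_mod unfolding N_def by metis
  moreover have "m mod N < N" "n mod N < N" using Npos[where 'a='a] unfolding N_def by auto
  ultimately show ?thesis unfolding N_def inj_on_def by blast
qed

lemma dlog_mult:
  assumes "(x::'a::{field,finite}) \<noteq> 0" "y \<noteq> 0"
  shows "dlog (x * y) mod (card (UNIV::'a set) - 1) = (dlog x + dlog y) mod (card (UNIV::'a set) - 1)"
  apply (rule gen_pow_eq)
  using assms by (simp add: gen_dlog power_add)

lemma root_pow_mod:
  fixes z :: complex
  assumes "z ^ N = 1" shows "z ^ k = z ^ (k mod N)"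
proof -
  have "z ^ k = z ^ (N * (k div N) + k mod N)" by simp
  also have "\<dots> = z ^ (k mod N)" by (simp only: power_add power_mult assms power_one mult_1)
  finally show ?thesis .
qed

lemma dlog_1: "dlog (1::'a::{field,finite}) = 0"
proof -
  have "(gen::'a) ^ dlog (1::'a) = gen ^ 0" using gen_dlog[of "1::'a"] by simp
  hence "dlog (1::'a) mod (card (UNIV::'a set) - 1) = 0" using gen_pow_eq by fastforce
  thus ?thesis using dlog_lt[of "1::'a"] by simp
qed

lemma chi_in:
  assumes "z ^ (card (UNIV::'a::{field,finite} set) - 1) = 1"
  shows "(chi z :: 'a \<Rightarrow> complex) \<in> mchars"
  unfolding mchars_def
proof (intro CollectI conjI allI)
  show "chi z (0::'a) = 0" by (simp add: chi_def)
  show "chi z (1::'a) = 1" by (simp add: chi_def dlog_1)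
  fix x y :: 'a
  show "chi z (x * y) = chi z x * chi z y"
  proof (cases "x = 0 \<or> y = 0")
    case True thus ?thesis by (auto simp: chi_def)
  next
    case False
    hence "z ^ dlog (x * y) = z ^ (dlog x + dlog y)"
      using root_pow_mod[OF assms] dlog_mult by metis
    thus ?thesis using False by (simp add: chi_def power_add)
  qed
qed

lemma mc_0: "\<chi> \<in> mchars \<Longrightarrow> \<chi> 0 = 0" by (simp add: mchars_def)
lemma mc_1: "\<chi> \<in> mchars \<Longrightarrow> \<chi> 1 = 1" by (simp add: mchars_def)
lemma mc_mult: "\<chi> \<in> mchars \<Longrightarrow> \<chi> (x * y) = \<chi> x * \<chi> y" by (simp add: mchars_def)

lemma mc_nz: assumes "\<chi> \<in> mchars" "(x::'a::field) \<noteq> 0" shows "\<chi> x \<noteq> 0"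
proof
  assume "\<chi> x = 0"
  hence "\<chi> (x * inverse x) = 0" using mc_mult[OF assms(1)] by simp
  thus False using assms mc_1 by fastforce
qed

lemma mc_inverse: assumes "\<chi> \<in> mchars" shows "\<chi> (inverse (x::'a::field)) = inverse (\<chi> x)"
proof (cases "x = 0")
  case True thus ?thesis using mc_0[OF assms] by simp
next
  case False
  hence "\<chi> x * \<chi> (inverse x) = 1" using mc_mult[OF assms, of x "inverse x", symmetric] mc_1[OF assms] by simp
  thus ?thesis using inverse_unique by metis
qed

lemma mc_divide: assumes "\<chi> \<in> mchars" shows "\<chi> ((x::'a::field) / y) = \<chi> x / \<chi> y"
  using mc_mult[OF assms] mc_inverse[OF assms] by (simp add: divide_inverse)

lemma mc_power: assumes "\<chi> \<in> mchars" shows "\<chi> ((x::'a::field) ^ n) = \<chi> x ^ n"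
  by (induction n) (simp_all add: mc_1[OF assms] mc_mult[OF assms])

lemma mc_m1: assumes "\<chi> \<in> mchars" shows "\<chi> (-1::'a::field) * \<chi> (-1) = 1"
  using mc_mult[OF assms, of "-1" "-1"] mc_1[OF assms] by simp

lemma mc_gen: assumes "\<chi> \<in> mchars" "(x::'a::{field,finite}) \<noteq> 0"
  shows "\<chi> x = \<chi> gen ^ dlog x"
  using mc_power[OF assms(1)] gen_dlog[OF assms(2)] by metis

lemma mc_gen_root: assumes "\<chi> \<in> mchars"
  shows "\<chi> (gen::'a::{field,finite}) ^ (card (UNIV::'a set) - 1) = 1"
  using mc_power[OF assms, symmetric] fermat[of "gen::'a"] gen_props mc_1[OF assms] by metis

lemma chi_gen:
  assumes "z ^ (card (UNIV::'a::{field,finite} set) - 1) = 1"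
  shows "chi z (gen::'a) = z"
proof -
  have "(gen::'a) ^ dlog (gen::'a) = gen ^ 1" using gen_dlog[of "gen::'a"] gen_props[where 'a='a] by simp
  hence "dlog (gen::'a) mod (card (UNIV::'a set) - 1) = 1 mod (card (UNIV::'a set) - 1)"
    by (rule gen_pow_eq)
  hence "z ^ dlog (gen::'a) = z ^ 1" using root_pow_mod[OF assms] by metis
  thus ?thesis using gen_props[where 'a='a] by (simp add: chi_def)
qed

lemma mchars_bij:
  "bij_betw (\<lambda>\<chi>. \<chi> gen) (mchars :: ('a::{field,finite} \<Rightarrow> complex) set)
     {z. z ^ (card (UNIV::'a set) - 1) = 1}"
proof (rule bij_betw_byWitness[where f'=chi])
  show "\<forall>\<chi>\<in>(mchars :: ('a \<Rightarrow> complex) set). chi (\<chi> gen) = \<chi>"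
  proof
    fix \<chi> :: "'a \<Rightarrow> complex" assume h: "\<chi> \<in> mchars"
    show "chi (\<chi> gen) = \<chi>"
    proof
      fix x :: 'a show "chi (\<chi> gen) x = \<chi> x"
        using mc_gen[OF h] mc_0[OF h] by (auto simp: chi_def)
    qed
  qed
  show "\<forall>z\<in>{z. z ^ (card (UNIV::'a set) - 1) = 1}. chi z (gen::'a) = z" using chi_gen by blast
  show "(\<lambda>\<chi>. \<chi> gen) ` (mchars :: ('a \<Rightarrow> complex) set) \<subseteq> {z. z ^ (card (UNIV::'a set) - 1) = 1}"
    using mc_gen_root by blast
  show "chi ` {z. z ^ (card (UNIV::'a set) - 1) = 1} \<subseteq> (mchars :: ('a \<Rightarrow> complex) set)"
    using chi_in by blast
qed

lemma finite_mchars: "finite (mchars :: ('a::{field,finite} \<Rightarrow> complex) set)"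
proof -
  have "finite {z::complex. z ^ (card (UNIV::'a set) - 1) = 1}"
    by (rule finite_roots_unity) (use Npos[where 'a='a] in linarith)
  thus ?thesis using bij_betw_finite[OF mchars_bij[where 'a='a]] by simp
qed

lemma card_mchars: "card (mchars :: ('a::{field,finite} \<Rightarrow> complex) set) = card (UNIV::'a set) - 1"
  using bij_betw_same_card[OF mchars_bij[where 'a='a]] card_roots_unity_eq[OF Npos[where 'a='a]] by simp

lemma eps_in: "eps \<in> mchars" by (simp add: mchars_def eps_def)
lemma cmul_in: "a \<in> mchars \<Longrightarrow> b \<in> mchars \<Longrightarrow> cmul a b \<in> mchars"
  by (simp add: mchars_def cmul_def)
lemma cinv_in: "a \<in> mchars \<Longrightarrow> cinv a \<in> mchars"
  by (simp add: mchars_def cinv_def mult.commute)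

lemma chprod_in: "finite I \<Longrightarrow> (\<And>j. j \<in> I \<Longrightarrow> \<nu> j \<in> mchars) \<Longrightarrow> chprod \<nu> I \<in> mchars"
  unfolding mchars_def chprod_def
  by (auto simp: prod.distrib mchars_def)

lemma chprod_val: "x \<noteq> 0 \<Longrightarrow> chprod \<nu> I x = (\<Prod>j\<in>I. \<nu> j x)"
  by (simp add: chprod_def)

lemma cmul_eps: "a \<in> mchars \<Longrightarrow> cmul a eps = a"
  by (auto simp: cmul_def eps_def fun_eq_iff mc_0)
lemma eps_cmul: "a \<in> mchars \<Longrightarrow> cmul eps a = a"
  by (auto simp: cmul_def eps_def fun_eq_iff mc_0)
lemma cmul_comm: "cmul a b = cmul b a" by (simp add: cmul_def fun_eq_iff mult.commute)
lemma cmul_assoc: "cmul (cmul a b) c = cmul a (cmul b c)" by (simp add: cmul_def fun_eq_iff mult.assoc)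
lemma cmul_cinv: "a \<in> mchars \<Longrightarrow> cmul a (cinv a) = eps"
  by (auto simp: cmul_def cinv_def eps_def fun_eq_iff mc_0 mc_nz)
lemma cinv_cmul: "cinv (cmul a b) = cmul (cinv a) (cinv b)"
  by (simp add: cmul_def cinv_def fun_eq_iff)
lemma cinv_cinv: "cinv (cinv a) = a" by (simp add: cinv_def fun_eq_iff)
lemma cinv_eps: "cinv eps = eps" by (simp add: cinv_def eps_def fun_eq_iff)
lemma cinv_val: "a \<in> mchars \<Longrightarrow> cinv a x = a (inverse x)"
  by (simp add: cinv_def mc_inverse)

lemma mc_ne_eps: assumes "\<chi> \<in> mchars" "\<chi> \<noteq> eps" shows "\<exists>y. y \<noteq> 0 \<and> \<chi> y \<noteq> 1"
proof -
  obtain y where "\<chi> y \<noteq> eps y" using assms by blast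
  thus ?thesis using mc_0[OF assms(1)] by (auto simp: eps_def split: if_splits)
qed

lemma orth1:
  assumes "(\<chi> :: 'a::{field,finite} \<Rightarrow> complex) \<in> mchars"
  shows "(\<Sum>x\<in>UNIV. \<chi> x) = (if \<chi> = eps then of_nat (card (UNIV::'a set) - 1) else 0)"
proof (cases "\<chi> = eps")
  case True
  have "(\<Sum>x\<in>UNIV. (eps::'a \<Rightarrow> complex) x) = (eps::'a \<Rightarrow> complex) 0 + (\<Sum>x\<in>UNIV - {0::'a}. (eps::'a \<Rightarrow> complex) x)"
    using sum.remove[of "UNIV::'a set" "0::'a" "eps::'a\<Rightarrow>complex"] by simp
  also have "\<dots> = (\<Sum>x\<in>UNIV - {0::'a}. 1)" by (auto simp: eps_def intro!: sum.cong)
  finally have "(\<Sum>x\<in>UNIV. (eps::'a \<Rightarrow> complex) x) = (\<Sum>x\<in>UNIV - {0::'a}. 1)" .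
  thus ?thesis using True by (simp add: card_Diff_singleton)
next
  case False
  then obtain y where y: "y \<noteq> 0" "\<chi> y \<noteq> 1" using mc_ne_eps assms by blast
  have "(\<Sum>x\<in>UNIV. \<chi> x) = (\<Sum>x\<in>UNIV. \<chi> (y * x))"
    by (rule sum.reindex_bij_witness[of _ "\<lambda>x. y * x" "\<lambda>x. x / y"]) (use y in auto)
  also have "\<dots> = \<chi> y * (\<Sum>x\<in>UNIV. \<chi> x)" by (simp add: mc_mult[OF assms] sum_distrib_left)
  finally have "(1 - \<chi> y) * (\<Sum>x\<in>UNIV. \<chi> x) = 0" by (simp add: algebra_simps)
  thus ?thesis using y False by simp
qed

lemma orth2:
  assumes "(x::'a::{field,finite}) \<noteq> 0"
  shows "(\<Sum>\<chi>\<in>mchars. \<chi> x) = (if x = 1 then of_nat (card (UNIV::'a set) - 1) else 0)"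
proof (cases "x = 1")
  case True
  thus ?thesis by (simp add: mc_1 card_mchars)
next
  case False
  define N where "N = card (UNIV::'a set) - 1"
  have N0: "N > 0" using Npos unfolding N_def by blast
  define k where "k = dlog x"
  have kN: "k < N" using dlog_lt[OF assms] unfolding k_def N_def .
  have k0: "k \<noteq> 0" using gen_dlog[OF assms] False unfolding k_def by (metis power_0)
  define \<zeta> where "\<zeta> = cis (2 * pi * real 1 / real N)"
  have pw: "\<zeta> ^ j = cis (2 * pi * real j / real N)" for j
    unfolding \<zeta>_def by (simp add: DeMoivre mult_ac)
  have "\<zeta> ^ N = 1" unfolding pw using N0 by (simp add: complex_eq_iff)
  hence c0: "(chi \<zeta> :: 'a \<Rightarrow> complex) \<in> mchars" using chi_in unfolding N_def by blast
  have "inj_on (\<lambda>j. cis (2 * pi * real j / real N)) {..<N}"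
    using bij_betw_roots_unity[OF N0] unfolding bij_betw_def by blast
  hence "cis (2 * pi * real k / real N) \<noteq> cis (2 * pi * real 0 / real N)"
    using kN k0 N0 unfolding inj_on_def by blast
  hence cx: "chi \<zeta> x \<noteq> 1" using assms unfolding chi_def pw k_def by simp
  have "(\<Sum>\<chi>\<in>mchars. \<chi> x) = (\<Sum>\<chi>\<in>mchars. cmul (chi \<zeta>) \<chi> x)"
  proof -
    have e1: "cmul (cinv (chi \<zeta>)) (cmul (chi \<zeta>) \<chi>) = \<chi>" if h: "\<chi> \<in> mchars" for \<chi> :: "'a \<Rightarrow> complex"
      using h c0 by (metis cmul_assoc cmul_cinv cmul_comm eps_cmul)
    have e2: "cmul (chi \<zeta>) (cmul (cinv (chi \<zeta>)) \<chi>) = \<chi>" if h: "\<chi> \<in> mchars" for \<chi> :: "'a \<Rightarrow> complex"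
      using h c0 by (metis cmul_assoc cmul_cinv eps_cmul)
    show ?thesis
      by (rule sum.reindex_bij_witness[of _ "\<lambda>\<chi>. cmul (chi \<zeta>) \<chi>" "\<lambda>\<chi>. cmul (cinv (chi \<zeta>)) \<chi>"])
         (use e1 e2 c0 in \<open>auto simp: cmul_in cinv_in\<close>)
  qed
  also have "\<dots> = chi \<zeta> x * (\<Sum>\<chi>\<in>mchars. \<chi> x)" by (simp add: cmul_def sum_distrib_left)
  finally have "(1 - chi \<zeta> x) * (\<Sum>\<chi>\<in>mchars. \<chi> x) = 0" by (simp add: algebra_simps)
  thus ?thesis using cx False by simp
qed

locale fq =
  fixes \<psi> :: "'a::{field,finite} \<Rightarrow> complex"
  assumes addc: "add_char \<psi>" and ntriv: "\<exists>x. \<psi> x \<noteq> 1"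
begin


lemma Q_NN: "(of_nat (card (UNIV::'a set))::complex) = (of_nat (card (UNIV::'a set) - 1)::complex) + 1"
  using card_ge2[where 'a='a] by (simp add: of_nat_diff)

lemma NN_nz: "(of_nat (card (UNIV::'a set) - 1)::complex) \<noteq> 0" using card_ge2[where 'a='a] by simp
lemma Q_nz: "(of_nat (card (UNIV::'a set))::complex) \<noteq> 0" using card_ge2[where 'a='a] by simp

lemma psi_0: "\<psi> 0 = 1" using addc by (simp add: add_char_def)
lemma psi_add: "\<psi> (x + y) = \<psi> x * \<psi> y" using addc by (simp add: add_char_def)

lemma psi_sum0: "(\<Sum>x\<in>UNIV. \<psi> x) = 0"
proof -
  obtain z where z: "\<psi> z \<noteq> 1" using ntriv by blast
  have "(\<Sum>x\<in>UNIV. \<psi> x) = (\<Sum>x\<in>UNIV. \<psi> (x + z))"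
    by (rule sum.reindex_bij_witness[of _ "\<lambda>y. y + z" "\<lambda>x. x - z"]) auto
  also have "\<dots> = \<psi> z * (\<Sum>x\<in>UNIV. \<psi> x)" by (simp add: psi_add sum_distrib_left mult.commute)
  finally have "(1 - \<psi> z) * (\<Sum>x\<in>UNIV. \<psi> x) = 0" by (simp add: algebra_simps)
  thus ?thesis using z by simp
qed

lemma psi_sum: "(\<Sum>x\<in>UNIV. \<psi> (a * x)) = (if a = 0 then (of_nat (card (UNIV::'a set))::complex) else 0)"
proof (cases "a = 0")
  case True thus ?thesis by (simp add: psi_0)
next
  case False
  have "(\<Sum>x\<in>UNIV. \<psi> (a * x)) = (\<Sum>x\<in>UNIV. \<psi> x)"
    by (rule sum.reindex_bij_witness[of _ "\<lambda>y. y / a" "\<lambda>x. a * x"]) (use False in auto)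
  thus ?thesis using False psi_sum0 by simp
qed

definition G :: "('a \<Rightarrow> complex) \<Rightarrow> complex" where
  "G \<chi> = (\<Sum>x\<in>UNIV. \<psi> x * \<chi> x)"

lemma gauss_G: assumes "\<chi> \<in> mchars" shows "gauss \<psi> \<chi> = - G \<chi>"
proof -
  have "(\<Sum>x\<in>UNIV. \<psi> x * \<chi> x) = \<psi> 0 * \<chi> 0 + (\<Sum>x\<in>UNIV - {0}. \<psi> x * \<chi> x)"
    using sum.remove[of "UNIV::'a set" 0 "\<lambda>x. \<psi> x * \<chi> x"] by simp
  thus ?thesis using mc_0[OF assms] by (simp add: gauss_def G_def)
qed

lemma H_lemma:
  assumes "\<chi> \<in> mchars"
  shows "(\<Sum>x\<in>UNIV. \<psi> (v * x) * \<chi> x) =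
     (if v = 0 then (if \<chi> = eps then (of_nat (card (UNIV::'a set) - 1)::complex) else 0) else inverse (\<chi> v) * G \<chi>)"
proof (cases "v = 0")
  case True thus ?thesis using orth1[OF assms] by (simp add: psi_0)
next
  case False
  have "(\<Sum>x\<in>UNIV. \<psi> (v * x) * \<chi> x) = (\<Sum>y\<in>UNIV. \<psi> y * \<chi> (y / v))"
    by (rule sum.reindex_bij_witness[of _ "\<lambda>y. y / v" "\<lambda>x. v * x"]) (use False in auto)
  also have "\<dots> = inverse (\<chi> v) * G \<chi>"
    by (simp add: G_def sum_distrib_left mc_mult[OF assms] mc_inverse[OF assms] divide_inverse mult_ac)
  finally show ?thesis using False by simp
qed

lemma gauss_eps: "gauss \<psi> eps = 1"
proof -
  have "(\<Sum>x\<in>UNIV. \<psi> x * (eps::'a \<Rightarrow> complex) x) = (\<Sum>x\<in>UNIV. \<psi> x - (if x = 0 then 1 else 0))"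
    by (rule sum.cong) (auto simp: eps_def psi_0)
  also have "\<dots> = - 1" by (simp add: sum_subtractf psi_sum0)
  finally show ?thesis using gauss_G[OF eps_in] by (simp add: G_def)
qed

lemma G_prod:
  assumes "\<chi> \<in> mchars" "\<chi> \<noteq> eps"
  shows "G (cinv \<chi>) * G \<chi> = \<chi> (-1) * (of_nat (card (UNIV::'a set))::complex)"
proof -
  have step: "(\<Sum>x\<in>UNIV. (\<psi> y * cinv \<chi> y) * (\<psi> x * \<chi> x)) =
      (if y = 0 then 0 else (\<Sum>t\<in>UNIV. \<psi> ((t + 1) * y) * \<chi> t))" for y
  proof (cases "y = 0")
    case True thus ?thesis by (simp add: cinv_def mc_0[OF assms(1)])
  next
    case False
    have "(\<Sum>x\<in>UNIV. (\<psi> y * cinv \<chi> y) * (\<psi> x * \<chi> x)) =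
          (\<Sum>t\<in>UNIV. (\<psi> y * cinv \<chi> y) * (\<psi> (t * y) * \<chi> (t * y)))"
      by (rule sum.reindex_bij_witness[of _ "\<lambda>x. x * y" "\<lambda>t. t / y"]) (use False in auto)
    also have "\<dots> = (\<Sum>t\<in>UNIV. \<psi> ((t + 1) * y) * \<chi> t)"
    proof (rule sum.cong)
      fix t
      have "\<chi> y \<noteq> 0" using mc_nz[OF assms(1) False] .
      thus "(\<psi> y * cinv \<chi> y) * (\<psi> (t * y) * \<chi> (t * y)) = \<psi> ((t + 1) * y) * \<chi> t"
        by (simp add: cinv_def mc_mult[OF assms(1)] psi_add distrib_right field_simps)
    qed simp
    finally show ?thesis using False by simp
  qed
  have "G (cinv \<chi>) * G \<chi> = (\<Sum>y\<in>UNIV. \<Sum>x\<in>UNIV. (\<psi> y * cinv \<chi> y) * (\<psi> x * \<chi> x))"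
    by (simp add: G_def sum_product)
  also have "\<dots> = (\<Sum>y\<in>UNIV. \<Sum>t\<in>UNIV. (if y = 0 then 0 else \<psi> ((t + 1) * y) * \<chi> t))"
    by (auto simp: step intro!: sum.cong)
  also have "\<dots> = (\<Sum>t\<in>UNIV. \<chi> t * (\<Sum>y\<in>UNIV. (if y = 0 then 0 else \<psi> ((t + 1) * y))))"
    by (subst sum.swap) (auto simp: sum_distrib_left intro!: sum.cong)
  also have "\<dots> = (\<Sum>t\<in>UNIV. \<chi> t * ((\<Sum>y\<in>UNIV. \<psi> ((t + 1) * y)) - 1))"
  proof (rule sum.cong)
    fix t
    have "(\<Sum>y\<in>UNIV. \<psi> ((t + 1) * y)) = \<psi> ((t+1) * 0) + (\<Sum>y\<in>UNIV - {0}. \<psi> ((t + 1) * y))"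
      using sum.remove[of "UNIV::'a set" 0 "\<lambda>y. \<psi> ((t + 1) * y)"] by simp
    moreover have "(\<Sum>y\<in>UNIV. (if y = 0 then 0 else \<psi> ((t + 1) * y))) = (\<Sum>y\<in>UNIV - {0}. \<psi> ((t + 1) * y))"
      using sum.remove[of "UNIV::'a set" 0 "\<lambda>y. (if y = 0 then 0 else \<psi> ((t + 1) * y))"]
      by simp
    ultimately show "\<chi> t * (\<Sum>y\<in>UNIV. (if y = 0 then 0 else \<psi> ((t + 1) * y))) =
        \<chi> t * ((\<Sum>y\<in>UNIV. \<psi> ((t + 1) * y)) - 1)" by (simp add: psi_0)
  qed simp
  also have "\<dots> = (\<Sum>t\<in>UNIV. \<chi> t * (if t = -1 then (of_nat (card (UNIV::'a set))::complex) else 0)) - (\<Sum>t\<in>UNIV. \<chi> t)"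
    by (simp add: psi_sum right_diff_distrib sum_subtractf eq_neg_iff_add_eq_0)
  also have "\<dots> = \<chi> (-1) * (of_nat (card (UNIV::'a set))::complex)"
    using orth1[OF assms(1)] assms(2) by (simp add: if_distrib cong: if_cong)
  finally show ?thesis .
qed

lemma gauss0_eq: "gauss0 \<psi> \<chi> = (if \<chi> = eps then (of_nat (card (UNIV::'a set))::complex) * gauss \<psi> \<chi> else gauss \<psi> \<chi>)"
  by (simp add: gauss0_def delta_def)

lemma gauss0_prod:
  assumes "\<chi> \<in> mchars"
  shows "gauss0 \<psi> \<chi> * gauss \<psi> (cinv \<chi>) = \<chi> (-1) * (of_nat (card (UNIV::'a set))::complex)"
proof (cases "\<chi> = eps")
  case True thus ?thesis by (simp add: gauss0_eq cinv_eps gauss_eps) (simp add: eps_def)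
next
  case False
  thus ?thesis using G_prod[OF assms False] gauss_G[OF assms] gauss_G[OF cinv_in[OF assms]]
    by (simp add: gauss0_eq mult.commute)
qed

lemma gauss_prod:
  assumes "\<chi> \<in> mchars" "\<chi> \<noteq> eps"
  shows "gauss \<psi> \<chi> * gauss \<psi> (cinv \<chi>) = \<chi> (-1) * (of_nat (card (UNIV::'a set))::complex)"
  using gauss0_prod[OF assms(1)] assms(2) by (simp add: gauss0_eq)

lemma m1_nz: "\<chi> \<in> mchars \<Longrightarrow> \<chi> (-1::'a) \<noteq> 0" by (rule mc_nz) simp_all

lemma gauss0_nz: assumes "\<chi> \<in> mchars" shows "gauss0 \<psi> \<chi> \<noteq> 0"
  using gauss0_prod[OF assms] m1_nz[OF assms] Q_nz by auto

lemma gauss_nz: assumes "\<chi> \<in> mchars" shows "gauss \<psi> \<chi> \<noteq> 0"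
  using gauss0_prod[OF cinv_in[OF assms]] m1_nz[OF cinv_in[OF assms]] Q_nz
  by (auto simp: cinv_cinv)


definition A :: "('a \<Rightarrow> complex) \<Rightarrow> ('a \<Rightarrow> complex) \<Rightarrow> ('a \<Rightarrow> complex) \<Rightarrow> complex" where
  "A \<alpha> \<gamma> \<mu> = poch \<psi> \<alpha> \<mu> / poch0 \<psi> \<gamma> \<mu>"

definition Phi :: "('a \<Rightarrow> complex) \<Rightarrow> ('a \<Rightarrow> complex) \<Rightarrow> 'a \<Rightarrow> complex" where
  "Phi \<alpha> \<gamma> u = (\<Sum>\<mu>\<in>mchars. \<mu> u * A \<alpha> \<gamma> \<mu>)"

lemma Phi_0: "Phi \<alpha> \<gamma> 0 = 0"
  by (simp add: Phi_def mc_0 cong: sum.cong)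

lemma A_eps: assumes "\<alpha> \<in> mchars" "\<gamma> \<in> mchars" shows "A \<alpha> \<gamma> eps = 1"
  using gauss_nz[OF assms(1)] gauss0_nz[OF assms(2)]
  by (simp add: A_def poch_def poch0_def cmul_eps assms)

lemma A_formula:
  assumes "\<alpha> \<in> mchars" "\<gamma> \<in> mchars" "\<mu> \<in> mchars"
  shows "A \<alpha> \<gamma> \<mu> = gauss0 \<psi> \<gamma> / (gauss \<psi> \<alpha> * \<gamma> (-1) * (of_nat (card (UNIV::'a set))::complex)) * inverse (\<mu> (-1)) *
     (G (cmul \<alpha> \<mu>) * G (cinv (cmul \<gamma> \<mu>)))"
proof -
  have gm: "cmul \<gamma> \<mu> \<in> mchars" "cmul \<alpha> \<mu> \<in> mchars" using assms by (simp_all add: cmul_in)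
  have p: "gauss0 \<psi> (cmul \<gamma> \<mu>) * gauss \<psi> (cinv (cmul \<gamma> \<mu>)) = \<gamma> (-1) * \<mu> (-1) * (of_nat (card (UNIV::'a set))::complex)"
    using gauss0_prod[OF gm(1)] by (simp add: cmul_def)
  have nz: "gauss \<psi> (cinv (cmul \<gamma> \<mu>)) \<noteq> 0" "gauss \<psi> \<alpha> \<noteq> 0" "gauss0 \<psi> \<gamma> \<noteq> 0"
    "gauss0 \<psi> (cmul \<gamma> \<mu>) \<noteq> 0"
    "\<gamma> (-1) \<noteq> 0" "\<mu> (-1) \<noteq> 0" "(of_nat (card (UNIV::'a set))::complex) \<noteq> 0"
    using gauss_nz gauss0_nz cinv_in gm assms m1_nz Q_nz by auto
  have g0: "gauss0 \<psi> (cmul \<gamma> \<mu>) = \<gamma> (-1) * \<mu> (-1) * (of_nat (card (UNIV::'a set))::complex) / gauss \<psi> (cinv (cmul \<gamma> \<mu>))"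
    using p nz by (simp add: field_simps)
  have "A \<alpha> \<gamma> \<mu> = gauss \<psi> (cmul \<alpha> \<mu>) * gauss0 \<psi> \<gamma> / (gauss \<psi> \<alpha> * gauss0 \<psi> (cmul \<gamma> \<mu>))"
    using nz by (simp add: A_def poch_def poch0_def field_simps)
  also have "\<dots> = gauss0 \<psi> \<gamma> / (gauss \<psi> \<alpha> * \<gamma> (-1) * (of_nat (card (UNIV::'a set))::complex)) * inverse (\<mu> (-1)) *
     (gauss \<psi> (cmul \<alpha> \<mu>) * gauss \<psi> (cinv (cmul \<gamma> \<mu>)))"
    unfolding g0 using nz by (simp add: field_simps)
  also have "gauss \<psi> (cmul \<alpha> \<mu>) * gauss \<psi> (cinv (cmul \<gamma> \<mu>)) = G (cmul \<alpha> \<mu>) * G (cinv (cmul \<gamma> \<mu>))"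
    using gauss_G[OF gm(2)] gauss_G[OF cinv_in[OF gm(1)]] by simp
  finally show ?thesis .
qed

lemma orth2':
  assumes "(w::'a) \<noteq> 0"
  shows "(\<Sum>\<chi>\<in>mchars. \<chi> w) = (if w = 1 then (of_nat (card (UNIV::'a set) - 1)::complex) else 0)"
  using orth2[OF assms] .

lemma Phi_formula:
  assumes "\<alpha> \<in> mchars" "\<gamma> \<in> mchars" "u \<noteq> 0"
  shows "Phi \<alpha> \<gamma> u = (of_nat (card (UNIV::'a set) - 1)::complex) * gauss0 \<psi> \<gamma> / (gauss \<psi> \<alpha> * \<gamma> (-1) * (of_nat (card (UNIV::'a set))::complex)) * inverse (\<gamma> (- u)) *
      (\<Sum>x\<in>UNIV. \<psi> ((1 - u) * x) * cmul \<alpha> (cinv \<gamma>) x)"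
proof -
  define C where "C = gauss0 \<psi> \<gamma> / (gauss \<psi> \<alpha> * \<gamma> (-1) * (of_nat (card (UNIV::'a set))::complex))"
  have inner: "\<mu> u * A \<alpha> \<gamma> \<mu> = C * (\<Sum>x\<in>UNIV. \<Sum>y\<in>UNIV.
        (\<psi> x * \<alpha> x * \<psi> y * inverse (\<gamma> y)) * \<mu> (u * x / (- y)))"
    if mu: "\<mu> \<in> mchars" for \<mu>
  proof -
    have "\<mu> u * A \<alpha> \<gamma> \<mu> = C * (\<mu> u * inverse (\<mu> (-1)) * (G (cmul \<alpha> \<mu>) * G (cinv (cmul \<gamma> \<mu>))))"
      using A_formula[OF assms(1,2) mu] by (simp add: C_def mult_ac)
    also have "G (cmul \<alpha> \<mu>) * G (cinv (cmul \<gamma> \<mu>)) = (\<Sum>x\<in>UNIV. \<Sum>y\<in>UNIV.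
        (\<psi> x * \<alpha> x * \<mu> x) * (\<psi> y * inverse (\<gamma> y) * inverse (\<mu> y)))"
      by (simp add: G_def sum_product cmul_def cinv_def mult_ac)
    also have "\<mu> u * inverse (\<mu> (-1)) * \<dots> = (\<Sum>x\<in>UNIV. \<Sum>y\<in>UNIV.
        (\<psi> x * \<alpha> x * \<psi> y * inverse (\<gamma> y)) * \<mu> (u * x / (- y)))"
    proof -
      have "\<mu> (u * x / (- y)) = \<mu> u * inverse (\<mu> (-1)) * \<mu> x * inverse (\<mu> y)" for x y
      proof -
        have "u * x / (- y) = u * x * inverse (-1) * inverse y" by (simp add: divide_inverse)
        thus ?thesis by (simp only: mc_mult[OF mu] mc_inverse[OF mu]) (simp add: mult_ac)
      qed
      thus ?thesis by (simp add: sum_distrib_left mult_ac)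
    qed
    finally show ?thesis .
  qed
  have "Phi \<alpha> \<gamma> u = C * (\<Sum>x\<in>UNIV. \<Sum>y\<in>UNIV.
        (\<psi> x * \<alpha> x * \<psi> y * inverse (\<gamma> y)) * (\<Sum>\<mu>\<in>mchars. \<mu> (u * x / (- y))))"
    unfolding Phi_def
    by (simp add: inner sum_distrib_left sum_distrib_right sum.swap[of _ mchars] mult_ac cong: sum.cong)
  also have "\<dots> = C * (\<Sum>x\<in>UNIV. \<Sum>y\<in>UNIV.
        (\<psi> x * \<alpha> x * \<psi> y * inverse (\<gamma> y)) * (if y = - (u * x) then (of_nat (card (UNIV::'a set) - 1)::complex) else 0))"
  proof -
    have pt: "(\<psi> x * \<alpha> x * \<psi> y * inverse (\<gamma> y)) * (\<Sum>\<mu>\<in>mchars. \<mu> (u * x / (- y))) =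
          (\<psi> x * \<alpha> x * \<psi> y * inverse (\<gamma> y)) * (if y = - (u * x) then (of_nat (card (UNIV::'a set) - 1)::complex) else 0)" for x y
    proof (cases "x = 0 \<or> y = 0")
      case True thus ?thesis using mc_0[OF assms(1)] mc_0[OF assms(2)] by auto
    next
      case False
      hence w: "u * x / (- y) \<noteq> 0" using assms(3) by simp
      have "(u * x / (- y) = 1) = (y = - (u * x))" using False by (auto simp: field_simps)
      thus ?thesis using orth2'[OF w] by simp
    qed
    show ?thesis by (simp only: pt)
  qed
  also have "\<dots> = C * (of_nat (card (UNIV::'a set) - 1)::complex) * (\<Sum>x\<in>UNIV. \<psi> x * \<alpha> x * \<psi> (- (u * x)) * inverse (\<gamma> (- (u * x))))"
    by (simp add: if_distrib sum_distrib_left mult_ac cong: if_cong)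
  also have "(\<Sum>x\<in>UNIV. \<psi> x * \<alpha> x * \<psi> (- (u * x)) * inverse (\<gamma> (- (u * x)))) =
     inverse (\<gamma> (- u)) * (\<Sum>x\<in>UNIV. \<psi> ((1 - u) * x) * cmul \<alpha> (cinv \<gamma>) x)"
  proof -
    have "\<psi> x * \<alpha> x * \<psi> (- (u * x)) * inverse (\<gamma> (- (u * x))) =
        inverse (\<gamma> (- u)) * (\<psi> ((1 - u) * x) * cmul \<alpha> (cinv \<gamma>) x)" for x
    proof -
      have "\<psi> ((1 - u) * x) = \<psi> x * \<psi> (- (u * x))"
        using psi_add[of x "- (u * x)"] by (simp add: algebra_simps)
      moreover have "\<gamma> (- (u * x)) = \<gamma> (- u) * \<gamma> x" using mc_mult[OF assms(2), of "- u" x] by simp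
      ultimately show ?thesis by (simp add: cmul_def cinv_def mult_ac)
    qed
    thus ?thesis by (simp add: sum_distrib_left)
  qed
  finally show ?thesis by (simp add: C_def mult_ac)
qed

lemma A_inv:
  assumes "\<alpha> \<in> mchars" "\<gamma> \<in> mchars" "\<mu> \<in> mchars"
  shows "A \<alpha> \<gamma> \<mu> = (1 / (of_nat (card (UNIV::'a set) - 1)::complex)) * (\<Sum>u\<in>UNIV. inverse (\<mu> u) * Phi \<alpha> \<gamma> u)"
proof -
  have "(\<Sum>u\<in>UNIV. inverse (\<mu> u) * Phi \<alpha> \<gamma> u) =
      (\<Sum>\<nu>\<in>mchars. A \<alpha> \<gamma> \<nu> * (\<Sum>u\<in>UNIV. cmul \<nu> (cinv \<mu>) u))"
    unfolding Phi_def
    by (simp add: sum_distrib_left sum_distrib_right sum.swap[of _ mchars] cmul_def cinv_def mult_ac)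
  also have "\<dots> = (\<Sum>\<nu>\<in>mchars. A \<alpha> \<gamma> \<nu> * (if \<nu> = \<mu> then (of_nat (card (UNIV::'a set) - 1)::complex) else 0))"
  proof (rule sum.cong)
    fix \<nu> :: "'a \<Rightarrow> complex" assume nu: "\<nu> \<in> mchars"
    have "(cmul \<nu> (cinv \<mu>) = eps) = (\<nu> = \<mu>)"
    proof
      assume h: "cmul \<nu> (cinv \<mu>) = eps"
      have "\<nu> = cmul (cmul \<nu> (cinv \<mu>)) \<mu>"
        using nu assms(3) by (metis cmul_assoc cmul_cinv cmul_comm cmul_eps)
      thus "\<nu> = \<mu>" using h eps_cmul[OF assms(3)] by simp
    qed (use assms(3) cmul_cinv in auto)
    thus "A \<alpha> \<gamma> \<nu> * (\<Sum>u\<in>UNIV. cmul \<nu> (cinv \<mu>) u) = A \<alpha> \<gamma> \<nu> * (if \<nu> = \<mu> then (of_nat (card (UNIV::'a set) - 1)::complex) else 0)"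
      using orth1[OF cmul_in[OF nu cinv_in[OF assms(3)]]] by simp
  qed simp
  also have "\<dots> = A \<alpha> \<gamma> \<mu> * (of_nat (card (UNIV::'a set) - 1)::complex)"
    using assms(3) finite_mchars[where 'a='a] by (simp add: if_distrib sum.delta cong: if_cong)
  finally show ?thesis using NN_nz by simp
qed

definition cc :: "('a \<Rightarrow> complex) \<Rightarrow> 'a \<Rightarrow> complex" where
  "cc \<beta> v = Phi \<beta> eps v / (1 - (of_nat (card (UNIV::'a set))::complex))"

lemma cc_formula:
  assumes "\<beta> \<in> mchars"
  shows "cc \<beta> v = (if v = 0 then 0 else if v = 1 then - (of_nat (card (UNIV::'a set) - 1)::complex) * (if \<beta> = eps then 1 else 0)
                    else inverse (\<beta> (1 - v)))"
proof (cases "v = 0")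
  case True thus ?thesis by (simp add: cc_def Phi_0)
next
  case False
  have e: "cmul \<beta> (cinv eps) = \<beta>" using assms by (simp add: cinv_eps cmul_eps)
  have q1: "1 - (of_nat (card (UNIV::'a set))::complex) = - (of_nat (card (UNIV::'a set) - 1)::complex)" using Q_NN by simp
  have ev: "(eps::'a\<Rightarrow>complex) (-v) = 1" "(eps::'a\<Rightarrow>complex) (-1) = 1"
    using False by (simp_all add: eps_def)
  have g0e: "gauss0 \<psi> eps = (of_nat (card (UNIV::'a set))::complex)" by (simp add: gauss0_eq gauss_eps)
  define H where "H = (\<Sum>x\<in>UNIV. \<psi> ((1 - v) * x) * \<beta> x)"
  have gnz: "gauss \<psi> \<beta> \<noteq> 0" by (rule gauss_nz[OF assms])
  have "Phi \<beta> eps v = (of_nat (card (UNIV::'a set) - 1)::complex) * (of_nat (card (UNIV::'a set))::complex) / (gauss \<psi> \<beta> * (of_nat (card (UNIV::'a set))::complex)) * H"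
    using Phi_formula[OF assms eps_in False] unfolding e g0e ev H_def by simp
  also have "\<dots> = (of_nat (card (UNIV::'a set) - 1)::complex) / gauss \<psi> \<beta> * H" using Q_nz by simp
  finally have "cc \<beta> v = ((of_nat (card (UNIV::'a set) - 1)::complex) / gauss \<psi> \<beta> * H) / (- (of_nat (card (UNIV::'a set) - 1)::complex))"
    unfolding cc_def q1 by (rule arg_cong[where f="\<lambda>z. z / - (of_nat (card (UNIV::'a set) - 1)::complex)"])
  moreover have gen: "n \<noteq> 0 \<Longrightarrow> (n / g * h) / (- n) = - h / g" for n g h :: complex
    by (simp add: field_simps)
  ultimately have P: "cc \<beta> v = - H / gauss \<psi> \<beta>" using gen[OF NN_nz] by simp
  show ?thesis
  proof (cases "v = 1")
    case True
    hence "H = (if \<beta> = eps then (of_nat (card (UNIV::'a set) - 1)::complex) else 0)"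
      using H_lemma[OF assms, of 0] unfolding H_def by simp
    thus ?thesis using P True False by (simp add: gauss_eps)
  next
    case v1: False
    hence "H = - inverse (\<beta> (1 - v)) * gauss \<psi> \<beta>"
      using H_lemma[OF assms, of "1 - v"] gauss_G[OF assms] unfolding H_def by simp
    thus ?thesis using P v1 False gnz by simp
  qed
qed

lemma FD_rep:
  assumes "\<alpha> \<in> mchars" "\<gamma> \<in> mchars"
  shows "FD \<psi> m \<alpha> \<beta> \<gamma> lam = (1 / (of_nat (card (UNIV::'a set) - 1)::complex)) * (\<Sum>u\<in>UNIV. Phi \<alpha> \<gamma> u * (\<Prod>j<m. cc (\<beta> j) (lam j / u)))"
proof (cases "m = 0")
  case True
  have sPhi: "(\<Sum>u\<in>UNIV. Phi \<alpha> \<gamma> u) = (\<Sum>u\<in>UNIV. inverse (eps u) * Phi \<alpha> \<gamma> u)"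
    by (rule sum.cong) (auto simp: eps_def Phi_0)
  note m0 = True
  have "FD \<psi> m \<alpha> \<beta> \<gamma> lam = 1" unfolding FD_def by (rule if_P[OF m0])
  also have "\<dots> = A \<alpha> \<gamma> eps" using A_eps[OF assms(1,2)] by simp
  also have "\<dots> = (1 / (of_nat (card (UNIV::'a set) - 1)::complex)) * (\<Sum>u\<in>UNIV. Phi \<alpha> \<gamma> u)"
    unfolding A_inv[OF assms(1,2) eps_in] sPhi ..
  finally show ?thesis using m0 by simp
next
  case False
  define XX where "XX = (mchars :: ('a \<Rightarrow> complex) set)"
  define f where "f u j \<chi> = A (\<beta> j) eps \<chi> * \<chi> (lam j / u)" for u j \<chi>
  have T: "poch \<psi> \<alpha> (chprod \<nu> {..<m}) * (\<Prod>j<m. poch \<psi> (\<beta> j) (\<nu> j))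
        / (poch0 \<psi> \<gamma> (chprod \<nu> {..<m}) * (\<Prod>j<m. poch0 \<psi> eps (\<nu> j)))
        * (\<Prod>j<m. \<nu> j (lam j)) =
      (1 / (of_nat (card (UNIV::'a set) - 1)::complex)) * (\<Sum>u\<in>UNIV. Phi \<alpha> \<gamma> u * (\<Prod>j<m. f u j (\<nu> j)))"
    if nu: "\<nu> \<in> {..<m} \<rightarrow>\<^sub>E XX" for \<nu>
  proof -
    have nuXX: "\<nu> j \<in> mchars" if "j < m" for j using nu that by (auto simp: XX_def)
    have cp: "chprod \<nu> {..<m} \<in> mchars" by (rule chprod_in) (auto simp: nuXX)
    have "poch \<psi> \<alpha> (chprod \<nu> {..<m}) * (\<Prod>j<m. poch \<psi> (\<beta> j) (\<nu> j))
        / (poch0 \<psi> \<gamma> (chprod \<nu> {..<m}) * (\<Prod>j<m. poch0 \<psi> eps (\<nu> j)))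
        * (\<Prod>j<m. \<nu> j (lam j)) =
        A \<alpha> \<gamma> (chprod \<nu> {..<m}) * (\<Prod>j<m. A (\<beta> j) eps (\<nu> j) * \<nu> j (lam j))"
    proof -
      have e1: "(\<Prod>j<m. A (\<beta> j) eps (\<nu> j) * \<nu> j (lam j)) =
          (\<Prod>j<m. poch \<psi> (\<beta> j) (\<nu> j)) / (\<Prod>j<m. poch0 \<psi> eps (\<nu> j)) * (\<Prod>j<m. \<nu> j (lam j))"
        by (simp only: prod.distrib A_def prod_dividef)
      have gen2: "a * p1 / (c * p2) * p3 = a / c * (p1 / p2 * p3)" for a c p1 p2 p3 :: complex
        by (metis times_divide_times_eq mult.assoc)
      show ?thesis unfolding e1 unfolding A_def by (rule gen2)
    qed
    also have "\<dots> = (1 / (of_nat (card (UNIV::'a set) - 1)::complex)) * (\<Sum>u\<in>UNIV. Phi \<alpha> \<gamma> u *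
        (inverse (chprod \<nu> {..<m} u) * (\<Prod>j<m. A (\<beta> j) eps (\<nu> j) * \<nu> j (lam j))))"
      unfolding A_inv[OF assms(1,2) cp] by (simp add: sum_distrib_right mult_ac)
    also have "\<dots> = (1 / (of_nat (card (UNIV::'a set) - 1)::complex)) * (\<Sum>u\<in>UNIV. Phi \<alpha> \<gamma> u * (\<Prod>j<m. f u j (\<nu> j)))"
    proof -
      have pt: "Phi \<alpha> \<gamma> u * (inverse (chprod \<nu> {..<m} u) * (\<Prod>j<m. A (\<beta> j) eps (\<nu> j) * \<nu> j (lam j))) =
            Phi \<alpha> \<gamma> u * (\<Prod>j<m. f u j (\<nu> j))" for u
      proof (cases "u = 0")
        case True thus ?thesis by (simp add: Phi_0)
      next
        case False
        have "inverse (chprod \<nu> {..<m} u) = (\<Prod>j<m. inverse (\<nu> j u))"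
          using False prod_inversef[of "\<lambda>j. \<nu> j u" "{..<m}"] by (simp add: chprod_val o_def)
        moreover have "(\<Prod>j<m. inverse (\<nu> j u)) * (\<Prod>j<m. A (\<beta> j) eps (\<nu> j) * \<nu> j (lam j)) =
            (\<Prod>j<m. f u j (\<nu> j))"
          unfolding prod.distrib[symmetric] f_def
          by (rule prod.cong) (auto simp: mc_mult[OF nuXX] mc_inverse[OF nuXX] divide_inverse mult_ac)
        ultimately show ?thesis by simp
      qed
      show ?thesis by (simp only: pt)
    qed
    finally show ?thesis .
  qed
  note mpos = False
  have "FD \<psi> m \<alpha> \<beta> \<gamma> lam = (1 / (1 - (of_nat (card (UNIV::'a set))::complex)) ^ m) * (\<Sum>\<nu>\<in>{..<m} \<rightarrow>\<^sub>E XX.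
      poch \<psi> \<alpha> (chprod \<nu> {..<m}) * (\<Prod>j<m. poch \<psi> (\<beta> j) (\<nu> j))
        / (poch0 \<psi> \<gamma> (chprod \<nu> {..<m}) * (\<Prod>j<m. poch0 \<psi> eps (\<nu> j)))
        * (\<Prod>j<m. \<nu> j (lam j)))"
    unfolding FD_def XX_def using mpos by (simp only: if_False)
  also have "\<dots> = (1 / (1 - (of_nat (card (UNIV::'a set))::complex)) ^ m) * (\<Sum>\<nu>\<in>{..<m} \<rightarrow>\<^sub>E XX.
      (1 / (of_nat (card (UNIV::'a set) - 1)::complex)) * (\<Sum>u\<in>UNIV. Phi \<alpha> \<gamma> u * (\<Prod>j<m. f u j (\<nu> j))))"
    by (rule arg_cong[where f="\<lambda>z. (1 / (1 - (of_nat (card (UNIV::'a set))::complex)) ^ m) * z"], rule sum.cong[OF refl], rule T)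
  also have "\<dots> = (1 / (1 - (of_nat (card (UNIV::'a set))::complex)) ^ m) * (1 / (of_nat (card (UNIV::'a set) - 1)::complex)) * (\<Sum>u\<in>UNIV. Phi \<alpha> \<gamma> u *
      (\<Sum>\<nu>\<in>{..<m} \<rightarrow>\<^sub>E XX. (\<Prod>j<m. f u j (\<nu> j))))"
    by (simp add: sum_distrib_left sum.swap[of _ "{..<m} \<rightarrow>\<^sub>E XX"] mult_ac)
  also have "\<dots> = (1 / (1 - (of_nat (card (UNIV::'a set))::complex)) ^ m) * (1 / (of_nat (card (UNIV::'a set) - 1)::complex)) * (\<Sum>u\<in>UNIV. Phi \<alpha> \<gamma> u *
      (\<Prod>j<m. Phi (\<beta> j) eps (lam j / u)))"
  proof -
    have "(\<Sum>\<nu>\<in>{..<m} \<rightarrow>\<^sub>E XX. (\<Prod>j<m. f u j (\<nu> j))) = (\<Prod>j<m. \<Sum>\<chi>\<in>XX. f u j \<chi>)" for u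
      using prod_sum_PiE[of "{..<m}" "\<lambda>_. XX" "f u", symmetric] finite_mchars[where 'a='a] by (simp add: XX_def)
    moreover have "(\<Sum>\<chi>\<in>XX. f u j \<chi>) = Phi (\<beta> j) eps (lam j / u)" for u j
      by (simp add: f_def Phi_def XX_def mult.commute)
    ultimately show ?thesis by simp
  qed
  also have "\<dots> = (1 / (of_nat (card (UNIV::'a set) - 1)::complex)) * (\<Sum>u\<in>UNIV. Phi \<alpha> \<gamma> u * (\<Prod>j<m. cc (\<beta> j) (lam j / u)))"
  proof -
    have "(\<Prod>j<m. cc (\<beta> j) (lam j / u)) = (\<Prod>j<m. Phi (\<beta> j) eps (lam j / u)) / (1 - (of_nat (card (UNIV::'a set))::complex)) ^ m" for u
      by (simp add: cc_def prod_dividef)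
    thus ?thesis by (simp add: sum_distrib_left sum_divide_distrib mult_ac)
  qed
  finally show ?thesis .
qed


lemma chprod_eps_all: "(\<And>j. j \<in> I \<Longrightarrow> \<beta> j = eps) \<Longrightarrow> chprod \<beta> I = eps"
  by (auto simp: chprod_def eps_def fun_eq_iff intro!: prod.neutral)

lemma prod_cc:
  assumes "finite I" "I \<noteq> {}" "\<And>j. j \<in> I \<Longrightarrow> \<beta> j \<in> mchars" "chprod \<beta> I \<noteq> eps"
  shows "(\<Prod>j\<in>I. cc (\<beta> j) v) = cc (chprod \<beta> I) v"
proof -
  have B: "chprod \<beta> I \<in> mchars" using chprod_in assms by blast
  consider "v = 0" | "v = 1" | "v \<noteq> 0" "v \<noteq> 1" by blast
  then show ?thesis
  proof cases
    case 1
    obtain j where j: "j \<in> I" using assms(2) by blast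
    have "cc (\<beta> j) v = 0" using cc_formula[OF assms(3)[OF j]] 1 by simp
    hence "(\<Prod>j\<in>I. cc (\<beta> j) v) = 0" using assms(1) j by (intro prod_zero) auto
    thus ?thesis using 1 cc_formula[OF B] by simp
  next
    case 2
    obtain j where j: "j \<in> I" "\<beta> j \<noteq> eps" using assms(4) chprod_eps_all by blast
    have "cc (\<beta> j) v = 0" using cc_formula[OF assms(3)[OF j(1)]] 2 j(2) by simp
    hence "(\<Prod>j\<in>I. cc (\<beta> j) v) = 0" using assms(1) j(1) by (intro prod_zero) auto
    thus ?thesis using 2 cc_formula[OF B] assms(4) by simp
  next
    case 3
    have "(\<Prod>j\<in>I. cc (\<beta> j) v) = (\<Prod>j\<in>I. inverse (\<beta> j (1 - v)))"
      using 3 cc_formula assms(3) by (intro prod.cong) auto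
    also have "\<dots> = inverse (\<Prod>j\<in>I. \<beta> j (1 - v))"
      using prod_inversef[of "\<lambda>j. \<beta> j (1 - v)" I] by (simp add: o_def)
    also have "\<dots> = inverse (chprod \<beta> I (1 - v))" using 3 by (simp add: chprod_val)
    finally show ?thesis using 3 cc_formula[OF B] by simp
  qed
qed

lemma prod_split:
  fixes i n :: nat
  assumes "i < n"
  shows "(\<Prod>j<n. cc (\<beta> j) ((if j < i then lam j else x) / u)) =
     (\<Prod>j<i. cc (\<beta> j) (lam j / u)) * (\<Prod>j\<in>{i..<n}. cc (\<beta> j) (x / u))"
proof -
  have split: "{..<n} = {..<i} \<union> {i..<n}" using assms by auto
  have "(\<Prod>j<n. cc (\<beta> j) ((if j < i then lam j else x) / u)) =
     (\<Prod>j<i. cc (\<beta> j) ((if j < i then lam j else x) / u)) *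
     (\<Prod>j\<in>{i..<n}. cc (\<beta> j) ((if j < i then lam j else x) / u))"
    unfolding split by (rule prod.union_disjoint) auto
  also have "(\<Prod>j<i. cc (\<beta> j) ((if j < i then lam j else x) / u)) = (\<Prod>j<i. cc (\<beta> j) (lam j / u))"
    by (rule prod.cong) auto
  also have "(\<Prod>j\<in>{i..<n}. cc (\<beta> j) ((if j < i then lam j else x) / u)) = (\<Prod>j\<in>{i..<n}. cc (\<beta> j) (x / u))"
    by (rule prod.cong) auto
  finally show ?thesis .
qed

lemma part1:
  assumes a: "\<alpha> \<in> mchars" "\<gamma> \<in> mchars" and b: "\<And>j. j < n \<Longrightarrow> \<beta> j \<in> mchars"
    and i: "i < n" and ne: "chprod \<beta> {i..<n} \<noteq> eps"
  shows "FD \<psi> n \<alpha> \<beta> \<gamma> (\<lambda>j. if j < i then lam j else x) =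
         FD \<psi> (Suc i) \<alpha> (\<beta>(i := chprod \<beta> {i..<n})) \<gamma> (lam(i := x))"
proof -
  define B where "B = chprod \<beta> {i..<n}"
  have Bin: "B \<in> mchars" unfolding B_def by (rule chprod_in) (auto intro: b)
  have b': "(\<beta>(i := B)) j \<in> mchars" if "j < Suc i" for j using b Bin i that by auto
  have eq: "(\<Prod>j<n. cc (\<beta> j) ((if j < i then lam j else x) / u)) =
            (\<Prod>j<Suc i. cc ((\<beta>(i := B)) j) ((lam(i := x)) j / u))" for u
  proof -
    have "(\<Prod>j\<in>{i..<n}. cc (\<beta> j) (x / u)) = cc B (x / u)"
      unfolding B_def using i ne b by (intro prod_cc) auto
    moreover have "(\<Prod>j<Suc i. cc ((\<beta>(i := B)) j) ((lam(i := x)) j / u)) =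
        (\<Prod>j<i. cc ((\<beta>(i := B)) j) ((lam(i := x)) j / u)) * cc B (x / u)"
      by (simp add: lessThan_Suc mult.commute)
    moreover have "(\<Prod>j<i. cc ((\<beta>(i := B)) j) ((lam(i := x)) j / u)) = (\<Prod>j<i. cc (\<beta> j) (lam j / u))"
      by (rule prod.cong) auto
    ultimately show ?thesis using prod_split[OF i, of \<beta> lam x u] by simp
  qed
  show ?thesis unfolding B_def[symmetric] FD_rep[where m=n and \<beta>=\<beta>, OF a]
    FD_rep[where m="Suc i" and \<beta>="\<beta>(i := B)", OF a] by (simp only: eq)
qed

lemma chprod_one: "\<nu> 0 \<in> mchars \<Longrightarrow> chprod \<nu> {..<1} = \<nu> 0"
  by (auto simp: chprod_def fun_eq_iff mc_0 lessThan_Suc)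

lemma FD1_F21:
  assumes "\<alpha> \<in> mchars" "\<gamma> \<in> mchars"
  shows "FD \<psi> 1 \<alpha> \<beta> \<gamma> lam = F21 \<psi> \<alpha> (\<beta> 0) \<gamma> (lam 0)"
proof -
  have "FD \<psi> 1 \<alpha> \<beta> \<gamma> lam = (1 / (1 - (of_nat (card (UNIV::'a set))::complex)) ^ 1) * (\<Sum>\<nu>\<in>{..<1} \<rightarrow>\<^sub>E mchars.
        poch \<psi> \<alpha> (chprod \<nu> {..<1}) * (\<Prod>j<1. poch \<psi> (\<beta> j) (\<nu> j))
        / (poch0 \<psi> \<gamma> (chprod \<nu> {..<1}) * (\<Prod>j<1. poch0 \<psi> eps (\<nu> j)))
        * (\<Prod>j<1. \<nu> j (lam j)))"
    unfolding FD_def by (simp only: one_neq_zero if_False)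
  also have "(\<Sum>\<nu>\<in>{..<1} \<rightarrow>\<^sub>E mchars.
        poch \<psi> \<alpha> (chprod \<nu> {..<1}) * (\<Prod>j<1. poch \<psi> (\<beta> j) (\<nu> j))
        / (poch0 \<psi> \<gamma> (chprod \<nu> {..<1}) * (\<Prod>j<1. poch0 \<psi> eps (\<nu> j)))
        * (\<Prod>j<1. \<nu> j (lam j))) =
      (\<Sum>\<chi>\<in>mchars. poch \<psi> \<alpha> \<chi> * poch \<psi> (\<beta> 0) \<chi> / (poch0 \<psi> eps \<chi> * poch0 \<psi> \<gamma> \<chi>) * \<chi> (lam 0))"
  proof (rule sum.reindex_bij_witness[of _ "\<lambda>\<chi>. restrict (\<lambda>_. \<chi>) {..<1}" "\<lambda>\<nu>. \<nu> 0"])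
    fix \<nu> :: "nat \<Rightarrow> 'a \<Rightarrow> complex" assume h: "\<nu> \<in> {..<1} \<rightarrow>\<^sub>E mchars"
    show "restrict (\<lambda>_. \<nu> 0) {..<1} = \<nu>"
      using h by (auto simp: fun_eq_iff PiE_iff extensional_def)
    show "\<nu> 0 \<in> mchars" using h by auto
    have h0: "\<nu> 0 \<in> mchars" using h by auto
    show "poch \<psi> \<alpha> (\<nu> 0) * poch \<psi> (\<beta> 0) (\<nu> 0) / (poch0 \<psi> eps (\<nu> 0) * poch0 \<psi> \<gamma> (\<nu> 0)) * \<nu> 0 (lam 0) =
        poch \<psi> \<alpha> (chprod \<nu> {..<1}) * (\<Prod>j<1. poch \<psi> (\<beta> j) (\<nu> j))
        / (poch0 \<psi> \<gamma> (chprod \<nu> {..<1}) * (\<Prod>j<1. poch0 \<psi> eps (\<nu> j)))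
        * (\<Prod>j<1. \<nu> j (lam j))"
      unfolding chprod_one[of \<nu>, OF h0] by (simp add: lessThan_Suc mult.commute)
  qed auto
  finally show ?thesis by (simp add: F21_def)
qed

lemma alg:
  fixes NN g0c ga Q G1 g0a g0B grho grhob a1 b1 c1 Bu B3 A3 C3 Cu :: complex
  assumes nz: "ga \<noteq> 0" "Q \<noteq> 0" "g0a \<noteq> 0" "g0B \<noteq> 0" "a1 \<noteq> 0" "b1 \<noteq> 0" "c1 \<noteq> 0"
     "Bu \<noteq> 0" "B3 \<noteq> 0" "A3 \<noteq> 0" "C3 \<noteq> 0" "Cu \<noteq> 0"
  and r1: "g0a * G1 = inverse a1 * c1 * Q"
  and r2: "grho * grhob = inverse a1 * inverse b1 * c1 * Q"
  and r3: "b1 * b1 = 1"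
  shows "NN * g0c / (ga * c1 * Q) * inverse Cu * (inverse (A3 * inverse C3) * - G1) * inverse (b1 * B3 * inverse Bu)
    = g0c * grho / (g0a * g0B) * (NN * g0B / (ga * (inverse b1 * c1) * Q) * inverse (inverse (b1 * Bu) * Cu) *
        (inverse (A3 * B3 * inverse C3) * - grhob))"
proof -
  have G1: "G1 = inverse a1 * c1 * Q / g0a" using r1 nz by (simp add: field_simps)
  have b: "inverse b1 = b1" using r3 nz by (simp add: field_simps)
  have b2: "b1 * (b1 * z) = z" for z using r3 by (simp add: mult.assoc[symmetric])
  have gg: "grho * grhob = inverse a1 * b1 * c1 * Q" using r2 b by simp
  have "g0c * grho / (g0a * g0B) * (NN * g0B / (ga * (inverse b1 * c1) * Q) * inverse (inverse (b1 * Bu) * Cu) *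
        (inverse (A3 * B3 * inverse C3) * - grhob)) =
      - (grho * grhob) * g0c * NN * b1 * Bu * C3 / (g0a * Cu * ga * inverse b1 * c1 * Q * A3 * B3)"
    using nz by (simp add: field_simps)
  also have "\<dots> = - (inverse a1 * b1 * c1 * Q) * g0c * NN * b1 * Bu * C3 / (g0a * Cu * ga * b1 * c1 * Q * A3 * B3)"
    unfolding gg b ..
  finally show ?thesis unfolding G1 using nz r3 b2 by (simp add: field_simps) (auto simp: b2)
qed

lemma key3:
  assumes a: "\<alpha> \<in> mchars" "\<gamma> \<in> mchars" "B \<in> mchars" and ne: "B \<noteq> eps" "B \<noteq> cmul (cinv \<alpha>) \<gamma>"
  shows "Phi \<alpha> \<gamma> u * cc B (1 / u) =
    gauss0 \<psi> \<gamma> * gauss \<psi> (cmul (cinv (cmul \<alpha> B)) \<gamma>)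
      / (gauss0 \<psi> (cmul (cinv \<alpha>) \<gamma>) * gauss0 \<psi> (cmul (cinv B) \<gamma>)) * Phi \<alpha> (cmul (cinv B) \<gamma>) u"
proof -
  define \<gamma>' where "\<gamma>' = cmul (cinv B) \<gamma>"
  define \<rho> where "\<rho> = cmul (cinv (cmul \<alpha> B)) \<gamma>"
  define \<chi>1 where "\<chi>1 = cmul \<alpha> (cinv \<gamma>)"
  define \<chi>2 where "\<chi>2 = cmul \<alpha> (cinv \<gamma>')"
  have g'in: "\<gamma>' \<in> mchars" unfolding \<gamma>'_def using a by (simp add: cmul_in cinv_in)
  have rin: "\<rho> \<in> mchars" unfolding \<rho>_def using a by (simp add: cmul_in cinv_in)
  have c1in: "\<chi>1 \<in> mchars" unfolding \<chi>1_def using a by (simp add: cmul_in cinv_in)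
  have c2in: "\<chi>2 \<in> mchars" unfolding \<chi>2_def using a g'in by (simp add: cmul_in cinv_in)
  have c2val: "\<chi>2 x = \<alpha> x * B x * inverse (\<gamma> x)" for x
    unfolding \<chi>2_def \<gamma>'_def by (simp add: cmul_def cinv_def inverse_mult_distrib mult_ac)
  have ne2: "\<chi>2 \<noteq> eps"
  proof
    assume h: "\<chi>2 = eps"
    have "B = cmul (cinv \<alpha>) \<gamma>"
    proof
      fix x show "B x = cmul (cinv \<alpha>) \<gamma> x"
      proof (cases "x = 0")
        case True thus ?thesis using a by (simp add: mc_0 cmul_def)
      next
        case False
        hence "\<alpha> x * B x * inverse (\<gamma> x) = 1" using h c2val[of x] by (simp add: eps_def)
        moreover have "\<alpha> x \<noteq> 0" "\<gamma> x \<noteq> 0" using False a mc_nz by auto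
        ultimately show ?thesis by (simp add: cmul_def cinv_def field_simps)
      qed
    qed
    thus False using ne by simp
  qed
  have rho_inv: "cinv \<rho> = \<chi>2"
    unfolding \<rho>_def \<chi>2_def \<gamma>'_def by (simp add: cmul_def cinv_def fun_eq_iff inverse_mult_distrib mult_ac)
  have rne: "\<rho> \<noteq> eps" using ne2 rho_inv cinv_eps by metis
  have ag: "cinv (cmul (cinv \<alpha>) \<gamma>) = \<chi>1" unfolding \<chi>1_def by (simp add: cinv_cmul cinv_cinv)
  define a1 where "a1 = \<alpha> (-1)"
  define b1 where "b1 = B (-1)"
  define c1 where "c1 = \<gamma> (-1)"
  have r1: "gauss0 \<psi> (cmul (cinv \<alpha>) \<gamma>) * gauss \<psi> \<chi>1 = inverse a1 * c1 * (of_nat (card (UNIV::'a set))::complex)"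
    using gauss0_prod[OF cmul_in[OF cinv_in[OF a(1)] a(2)]] unfolding ag
    by (simp add: a1_def c1_def cmul_def cinv_def)
  have r2: "gauss \<psi> \<rho> * gauss \<psi> \<chi>2 = inverse a1 * inverse b1 * c1 * (of_nat (card (UNIV::'a set))::complex)"
    using gauss_prod[OF rin rne] unfolding rho_inv
    by (simp add: a1_def b1_def c1_def \<rho>_def cmul_def cinv_def inverse_mult_distrib mult_ac)
  have r3: "b1 * b1 = 1" unfolding b1_def by (rule mc_m1[OF a(3)])
  consider "u = 0" | "u = 1" | "u \<noteq> 0" "u \<noteq> 1" by blast
  then show ?thesis
  proof cases
    case 1 thus ?thesis by (simp add: Phi_0)
  next
    case 2
    have "cc B (1 / u) = 0" using 2 cc_formula[OF a(3)] ne by simp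
    moreover have "Phi \<alpha> \<gamma>' u = 0"
      using Phi_formula[OF a(1) g'in, of u] 2 H_lemma[OF c2in, of 0] ne2 unfolding \<chi>2_def by simp
    ultimately show ?thesis unfolding \<gamma>'_def by simp
  next
    case 3
    have u1: "1 - u \<noteq> 0" using 3 by simp
    have cc3: "cc B (1 / u) = inverse (b1 * B (1 - u) * inverse (B u))"
    proof -
      have "1 - 1 / u = (-1) * (1 - u) * inverse u" using 3 by (simp add: field_simps)
      hence "B (1 - 1 / u) = b1 * B (1 - u) * inverse (B u)"
        unfolding b1_def by (simp only: mc_mult[OF a(3)] mc_inverse[OF a(3)])
      moreover have "1 / u \<noteq> 0" "1 / u \<noteq> 1" using 3 by auto
      ultimately show ?thesis using cc_formula[OF a(3), of "1 / u"] by simp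
    qed
    have P1: "Phi \<alpha> \<gamma> u = (of_nat (card (UNIV::'a set) - 1)::complex) * gauss0 \<psi> \<gamma> / (gauss \<psi> \<alpha> * c1 * (of_nat (card (UNIV::'a set))::complex)) * inverse (\<gamma> (- u)) *
        (inverse (\<alpha> (1 - u) * inverse (\<gamma> (1 - u))) * - gauss \<psi> \<chi>1)"
      using Phi_formula[OF a(1,2) 3(1)] H_lemma[OF c1in, of "1 - u"] u1 gauss_G[OF c1in]
      unfolding \<chi>1_def c1_def by (simp add: cmul_def cinv_def)
    have P2: "Phi \<alpha> \<gamma>' u = (of_nat (card (UNIV::'a set) - 1)::complex) * gauss0 \<psi> \<gamma>' / (gauss \<psi> \<alpha> * (inverse b1 * c1) * (of_nat (card (UNIV::'a set))::complex)) *
        inverse (inverse (b1 * B u) * \<gamma> (- u)) *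
        (inverse (\<alpha> (1 - u) * B (1 - u) * inverse (\<gamma> (1 - u))) * - gauss \<psi> \<chi>2)"
    proof -
      have "\<gamma>' (-1) = inverse b1 * c1" unfolding \<gamma>'_def b1_def c1_def by (simp add: cmul_def cinv_def)
      moreover have "\<gamma>' (- u) = inverse (b1 * B u) * \<gamma> (- u)"
      proof -
        have "B (- u) = b1 * B u" unfolding b1_def using mc_mult[OF a(3), of "-1" u] by simp
        thus ?thesis unfolding \<gamma>'_def by (simp add: cmul_def cinv_def)
      qed
      moreover have "(\<Sum>x\<in>UNIV. \<psi> ((1 - u) * x) * cmul \<alpha> (cinv \<gamma>') x) =
          inverse (\<alpha> (1 - u) * B (1 - u) * inverse (\<gamma> (1 - u))) * - gauss \<psi> \<chi>2"
        using H_lemma[OF c2in, of "1 - u"] u1 gauss_G[OF c2in] c2val[of "1 - u"] unfolding \<chi>2_def by simp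
      ultimately show ?thesis using Phi_formula[OF a(1) g'in 3(1)] by simp
    qed
    have nz: "gauss \<psi> \<alpha> \<noteq> 0" "(of_nat (card (UNIV::'a set))::complex) \<noteq> 0" "gauss0 \<psi> (cmul (cinv \<alpha>) \<gamma>) \<noteq> 0" "gauss0 \<psi> \<gamma>' \<noteq> 0"
       "a1 \<noteq> 0" "b1 \<noteq> 0" "c1 \<noteq> 0" "B u \<noteq> 0" "B (1 - u) \<noteq> 0" "\<alpha> (1 - u) \<noteq> 0" "\<gamma> (1 - u) \<noteq> 0"
       "\<gamma> (- u) \<noteq> 0"
      using gauss_nz[OF a(1)] Q_nz gauss0_nz[OF cmul_in[OF cinv_in[OF a(1)] a(2)]] gauss0_nz[OF g'in]
        m1_nz[OF a(1)] m1_nz[OF a(3)] m1_nz[OF a(2)] mc_nz[OF a(3) 3(1)] mc_nz[OF a(3) u1] mc_nz[OF a(1) u1]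
        mc_nz[OF a(2) u1] mc_nz[OF a(2)] 3(1)
      unfolding a1_def b1_def c1_def by auto
    show ?thesis
      unfolding cc3 P1 \<gamma>'_def[symmetric] P2 \<rho>_def[symmetric]
      by (rule alg[OF nz r1 r2 r3])
  qed
qed

lemma part3:
  assumes a: "\<alpha> \<in> mchars" "\<gamma> \<in> mchars" and b: "\<And>j. j < n \<Longrightarrow> \<beta> j \<in> mchars"
    and i: "i < n" and ne: "chprod \<beta> {i..<n} \<notin> {eps, cmul (cinv \<alpha>) \<gamma>}"
  shows "FD \<psi> n \<alpha> \<beta> \<gamma> (\<lambda>j. if j < i then lam j else 1)
        = gauss0 \<psi> \<gamma> * gauss \<psi> (cmul (cinv (cmul \<alpha> (chprod \<beta> {i..<n}))) \<gamma>)
          / (gauss0 \<psi> (cmul (cinv \<alpha>) \<gamma>) * gauss0 \<psi> (cmul (cinv (chprod \<beta> {i..<n})) \<gamma>))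
          * FD \<psi> i \<alpha> \<beta> (cmul (cinv (chprod \<beta> {i..<n})) \<gamma>) lam"
proof -
  define B where "B = chprod \<beta> {i..<n}"
  define K where "K = gauss0 \<psi> \<gamma> * gauss \<psi> (cmul (cinv (cmul \<alpha> B)) \<gamma>)
          / (gauss0 \<psi> (cmul (cinv \<alpha>) \<gamma>) * gauss0 \<psi> (cmul (cinv B) \<gamma>))"
  have Bin: "B \<in> mchars" unfolding B_def by (rule chprod_in) (auto intro: b)
  have ne': "B \<noteq> eps" "B \<noteq> cmul (cinv \<alpha>) \<gamma>" using ne unfolding B_def by auto
  have g'in: "cmul (cinv B) \<gamma> \<in> mchars" using Bin a by (simp add: cmul_in cinv_in)
  have bi: "\<beta> j \<in> mchars" if "j < i" for j using b i that by auto
  have eq: "Phi \<alpha> \<gamma> u * (\<Prod>j<n. cc (\<beta> j) ((if j < i then lam j else 1) / u)) =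
      K * (Phi \<alpha> (cmul (cinv B) \<gamma>) u * (\<Prod>j<i. cc (\<beta> j) (lam j / u)))" for u
  proof -
    have "(\<Prod>j\<in>{i..<n}. cc (\<beta> j) (1 / u)) = cc B (1 / u)"
      unfolding B_def using i ne' b unfolding B_def by (intro prod_cc) auto
    hence "(\<Prod>j<n. cc (\<beta> j) ((if j < i then lam j else 1) / u)) = (\<Prod>j<i. cc (\<beta> j) (lam j / u)) * cc B (1 / u)"
      using prod_split[OF i, of \<beta> lam 1 u] by simp
    hence "Phi \<alpha> \<gamma> u * (\<Prod>j<n. cc (\<beta> j) ((if j < i then lam j else 1) / u)) =
        (Phi \<alpha> \<gamma> u * cc B (1 / u)) * (\<Prod>j<i. cc (\<beta> j) (lam j / u))" by (simp add: mult_ac)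
    also have "\<dots> = K * Phi \<alpha> (cmul (cinv B) \<gamma>) u * (\<Prod>j<i. cc (\<beta> j) (lam j / u))"
      using key3[OF a Bin ne', of u] unfolding K_def[symmetric] by simp
    finally show ?thesis by (simp add: mult.assoc)
  qed
  have "FD \<psi> n \<alpha> \<beta> \<gamma> (\<lambda>j. if j < i then lam j else 1) =
      (1 / (of_nat (card (UNIV::'a set) - 1)::complex)) * (\<Sum>u\<in>UNIV. K * (Phi \<alpha> (cmul (cinv B) \<gamma>) u * (\<Prod>j<i. cc (\<beta> j) (lam j / u))))"
    unfolding FD_rep[where m=n and \<beta>=\<beta>, OF a] by (simp only: eq)
  also have "\<dots> = K * FD \<psi> i \<alpha> \<beta> (cmul (cinv B) \<gamma>) lam"
    unfolding FD_rep[where m=i and \<beta>=\<beta>, OF a(1) g'in] by (simp add: sum_distrib_left mult_ac)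
  finally show ?thesis unfolding K_def B_def .
qed

end

lemma main_thm:
  fixes \<psi> :: "'a::{field,finite} \<Rightarrow> complex"
    and \<alpha> \<gamma> :: "'a \<Rightarrow> complex" and \<beta> :: "nat \<Rightarrow> 'a \<Rightarrow> complex"
    and n i :: nat
  assumes "add_char \<psi>" and "\<exists>x. \<psi> x \<noteq> 1"
    and "n \<ge> 1" and "i < n"
    and "\<alpha> \<in> mchars" and "\<gamma> \<in> mchars" and "\<forall>j<n. \<beta> j \<in> mchars"
  shows
   "(chprod \<beta> {i..<n} \<noteq> eps \<longrightarrow>
      (\<forall>lam x. FD \<psi> n \<alpha> \<beta> \<gamma> (\<lambda>j. if j < i then lam j else x)
               = FD \<psi> (Suc i) \<alpha> (\<beta>(i := chprod \<beta> {i..<n})) \<gamma> (lam(i := x))))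
  \<and> (chprod \<beta> {..<n} \<noteq> eps \<longrightarrow>
      (\<forall>x. FD \<psi> n \<alpha> \<beta> \<gamma> (\<lambda>_. x) = F21 \<psi> \<alpha> (chprod \<beta> {..<n}) \<gamma> x))
  \<and> (chprod \<beta> {i..<n} \<notin> {eps, cmul (cinv \<alpha>) \<gamma>} \<longrightarrow>
      (\<forall>lam. FD \<psi> n \<alpha> \<beta> \<gamma> (\<lambda>j. if j < i then lam j else 1)
        = gauss0 \<psi> \<gamma> * gauss \<psi> (cmul (cinv (cmul \<alpha> (chprod \<beta> {i..<n}))) \<gamma>)
          / (gauss0 \<psi> (cmul (cinv \<alpha>) \<gamma>) * gauss0 \<psi> (cmul (cinv (chprod \<beta> {i..<n})) \<gamma>))
          * FD \<psi> i \<alpha> \<beta> (cmul (cinv (chprod \<beta> {i..<n})) \<gamma>) lam))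
  \<and> (chprod \<beta> {..<n} \<notin> {eps, cmul (cinv \<alpha>) \<gamma>} \<longrightarrow>
      FD \<psi> n \<alpha> \<beta> \<gamma> (\<lambda>_. 1)
        = gauss0 \<psi> \<gamma> * gauss \<psi> (cmul (cinv (cmul \<alpha> (chprod \<beta> {..<n}))) \<gamma>)
          / (gauss0 \<psi> (cmul (cinv \<alpha>) \<gamma>) * gauss0 \<psi> (cmul (cinv (chprod \<beta> {..<n})) \<gamma>)))"
proof -
  interpret fq \<psi> by unfold_locales (use assms(1,2) in auto)
  have a: "\<alpha> \<in> mchars" "\<gamma> \<in> mchars" using assms by auto
  have b: "\<And>j. j < n \<Longrightarrow> \<beta> j \<in> mchars" using assms by auto
  have n0: "0 < n" using assms by auto
  have c0: "chprod \<beta> {0..<n} = chprod \<beta> {..<n}" by (simp add: atLeast0LessThan)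
  have P1: "chprod \<beta> {i..<n} \<noteq> eps \<longrightarrow>
      (\<forall>lam x. FD \<psi> n \<alpha> \<beta> \<gamma> (\<lambda>j. if j < i then lam j else x)
               = FD \<psi> (Suc i) \<alpha> (\<beta>(i := chprod \<beta> {i..<n})) \<gamma> (lam(i := x)))"
    using part1[of \<alpha> \<gamma> n \<beta> i, OF a b assms(4)] by blast
  have P2: "chprod \<beta> {..<n} \<noteq> eps \<longrightarrow>
      (\<forall>x. FD \<psi> n \<alpha> \<beta> \<gamma> (\<lambda>_. x) = F21 \<psi> \<alpha> (chprod \<beta> {..<n}) \<gamma> x)"
  proof (intro impI allI)
    fix x assume h: "chprod \<beta> {..<n} \<noteq> eps"
    have "FD \<psi> n \<alpha> \<beta> \<gamma> (\<lambda>j. if j < 0 then (\<lambda>_. x) j else x)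
        = FD \<psi> (Suc 0) \<alpha> (\<beta>(0 := chprod \<beta> {0..<n})) \<gamma> ((\<lambda>_. x)(0 := x))"
      using part1[of \<alpha> \<gamma> n \<beta> 0, OF a b n0] h c0 by simp
    also have "\<dots> = F21 \<psi> \<alpha> (chprod \<beta> {..<n}) \<gamma> x"
      using FD1_F21[OF a, of "\<beta>(0 := chprod \<beta> {0..<n})" "(\<lambda>_. x)(0 := x)"] c0 by simp
    finally show "FD \<psi> n \<alpha> \<beta> \<gamma> (\<lambda>_. x) = F21 \<psi> \<alpha> (chprod \<beta> {..<n}) \<gamma> x" by simp
  qed
  have P3: "chprod \<beta> {i..<n} \<notin> {eps, cmul (cinv \<alpha>) \<gamma>} \<longrightarrow>
      (\<forall>lam. FD \<psi> n \<alpha> \<beta> \<gamma> (\<lambda>j. if j < i then lam j else 1)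
        = gauss0 \<psi> \<gamma> * gauss \<psi> (cmul (cinv (cmul \<alpha> (chprod \<beta> {i..<n}))) \<gamma>)
          / (gauss0 \<psi> (cmul (cinv \<alpha>) \<gamma>) * gauss0 \<psi> (cmul (cinv (chprod \<beta> {i..<n})) \<gamma>))
          * FD \<psi> i \<alpha> \<beta> (cmul (cinv (chprod \<beta> {i..<n})) \<gamma>) lam)"
    using part3[of \<alpha> \<gamma> n \<beta> i, OF a b assms(4)] by blast
  have P4: "chprod \<beta> {..<n} \<notin> {eps, cmul (cinv \<alpha>) \<gamma>} \<longrightarrow>
      FD \<psi> n \<alpha> \<beta> \<gamma> (\<lambda>_. 1)
        = gauss0 \<psi> \<gamma> * gauss \<psi> (cmul (cinv (cmul \<alpha> (chprod \<beta> {..<n}))) \<gamma>)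
          / (gauss0 \<psi> (cmul (cinv \<alpha>) \<gamma>) * gauss0 \<psi> (cmul (cinv (chprod \<beta> {..<n})) \<gamma>))"
  proof
    assume h: "chprod \<beta> {..<n} \<notin> {eps, cmul (cinv \<alpha>) \<gamma>}"
    have "FD \<psi> n \<alpha> \<beta> \<gamma> (\<lambda>j. if j < 0 then (\<lambda>_. 1) j else 1)
        = gauss0 \<psi> \<gamma> * gauss \<psi> (cmul (cinv (cmul \<alpha> (chprod \<beta> {0..<n}))) \<gamma>)
          / (gauss0 \<psi> (cmul (cinv \<alpha>) \<gamma>) * gauss0 \<psi> (cmul (cinv (chprod \<beta> {0..<n})) \<gamma>))
          * FD \<psi> 0 \<alpha> \<beta> (cmul (cinv (chprod \<beta> {0..<n})) \<gamma>) (\<lambda>_. 1)"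
      using part3[of \<alpha> \<gamma> n \<beta> 0, OF a b n0] h c0 by simp
    thus "FD \<psi> n \<alpha> \<beta> \<gamma> (\<lambda>_. 1)
        = gauss0 \<psi> \<gamma> * gauss \<psi> (cmul (cinv (cmul \<alpha> (chprod \<beta> {..<n}))) \<gamma>)
          / (gauss0 \<psi> (cmul (cinv \<alpha>) \<gamma>) * gauss0 \<psi> (cmul (cinv (chprod \<beta> {..<n})) \<gamma>))"
      unfolding c0 by (simp add: FD_def)
  qed
  show ?thesis using P1 P2 P3 P4 by blast
qed

theorem theorem3p23:
  fixes \<psi> :: "'a::{field,finite} \<Rightarrow> complex"
    and \<alpha> \<gamma> :: "'a \<Rightarrow> complex" and \<beta> :: "nat \<Rightarrow> 'a \<Rightarrow> complex"
    and n i :: nat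
  assumes "add_char \<psi>" and "\<exists>x. \<psi> x \<noteq> 1"
    and "n \<ge> 1" and "i < n"
    and "\<alpha> \<in> mchars" and "\<gamma> \<in> mchars" and "\<forall>j<n. \<beta> j \<in> mchars"
  shows
   "(chprod \<beta> {i..<n} \<noteq> eps \<longrightarrow>
      (\<forall>lam x. FD \<psi> n \<alpha> \<beta> \<gamma> (\<lambda>j. if j < i then lam j else x)
               = FD \<psi> (Suc i) \<alpha> (\<beta>(i := chprod \<beta> {i..<n})) \<gamma> (lam(i := x))))
  \<and> (chprod \<beta> {..<n} \<noteq> eps \<longrightarrow>
      (\<forall>x. FD \<psi> n \<alpha> \<beta> \<gamma> (\<lambda>_. x) = F21 \<psi> \<alpha> (chprod \<beta> {..<n}) \<gamma> x))
  \<and> (chprod \<beta> {i..<n} \<notin> {eps, cmul (cinv \<alpha>) \<gamma>} \<longrightarrow>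
      (\<forall>lam. FD \<psi> n \<alpha> \<beta> \<gamma> (\<lambda>j. if j < i then lam j else 1)
        = gauss0 \<psi> \<gamma> * gauss \<psi> (cmul (cinv (cmul \<alpha> (chprod \<beta> {i..<n}))) \<gamma>)
          / (gauss0 \<psi> (cmul (cinv \<alpha>) \<gamma>) * gauss0 \<psi> (cmul (cinv (chprod \<beta> {i..<n})) \<gamma>))
          * FD \<psi> i \<alpha> \<beta> (cmul (cinv (chprod \<beta> {i..<n})) \<gamma>) lam))
  \<and> (chprod \<beta> {..<n} \<notin> {eps, cmul (cinv \<alpha>) \<gamma>} \<longrightarrow>
      FD \<psi> n \<alpha> \<beta> \<gamma> (\<lambda>_. 1)
        = gauss0 \<psi> \<gamma> * gauss \<psi> (cmul (cinv (cmul \<alpha> (chprod \<beta> {..<n}))) \<gamma>)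
          / (gauss0 \<psi> (cmul (cinv \<alpha>) \<gamma>) * gauss0 \<psi> (cmul (cinv (chprod \<beta> {..<n})) \<gamma>)))"
  by (rule main_thm[OF assms])

end
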